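(* Let $m\geq 4$ be an integer and let $G$ be an $m$-fragile graph. Then: (1) for all non-adjacent $x,y\in V(G)$, $G$ admits an $m$-colouring $c$ with $c(x)=c(y)$; (2) for all distinct $x,y\in V(G)$, $G$ admits an $m$-colouring $c$ with $c(x)\neq c(y)$; (3) for all distinct $x,y,z\in V(G)$, $G$ admits an $m$-colouring $c$ with $c(x)\notin\{c(y),c(z)\}$; (4) for all distinct $x,y,z\in V(G)$ that are not all pairwise adjacent, $G$ admits an $m$-colouring $c$ with $|\{c(x),c(y),c(z)\}|=2$.
   Context: All graphs are finite and simple. A graph is $k$-connected if it has at least $k+1$ vertices and no vertex cutset with at most $k-1$ vertices. For an integer $m\geq 4$, a graph $G$ is $m$-fragile if every $3$-connected subgraph of $G$ is $(m-1)$-colourable. A $k$-colouring of $G$ is a function $c:V(G)\to\{1,\dots,k\}$ with $c(x)\neq c(y)$ for every edge $xy$. *)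

theory Defs
  imports Main
begin

definition graph :: "'a set \<Rightarrow> ('a \<Rightarrow> 'a \<Rightarrow> bool) \<Rightarrow> bool" where
  "graph V E \<longleftrightarrow> finite V \<and> (\<forall>x y. E x y \<longrightarrow> x \<in> V \<and> y \<in> V)
     \<and> (\<forall>x y. E x y \<longrightarrow> E y x) \<and> (\<forall>x. \<not> E x x)"

definition subgraph :: "'a set \<Rightarrow> ('a \<Rightarrow> 'a \<Rightarrow> bool) \<Rightarrow> 'a set \<Rightarrow> ('a \<Rightarrow> 'a \<Rightarrow> bool) \<Rightarrow> bool" where
  "subgraph W F V E \<longleftrightarrow> graph W F \<and> W \<subseteq> V \<and> (\<forall>x y. F x y \<longrightarrow> E x y)"

definition induced :: "('a \<Rightarrow> 'a \<Rightarrow> bool) \<Rightarrow> 'a set \<Rightarrow> 'a \<Rightarrow> 'a \<Rightarrow> bool" where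
  "induced E U = (\<lambda>x y. E x y \<and> x \<in> U \<and> y \<in> U)"

definition connected_graph :: "'a set \<Rightarrow> ('a \<Rightarrow> 'a \<Rightarrow> bool) \<Rightarrow> bool" where
  "connected_graph V E \<longleftrightarrow> V \<noteq> {} \<and> (\<forall>x\<in>V. \<forall>y\<in>V. (induced E V)\<^sup>*\<^sup>* x y)"

definition k_connected :: "nat \<Rightarrow> 'a set \<Rightarrow> ('a \<Rightarrow> 'a \<Rightarrow> bool) \<Rightarrow> bool" where
  "k_connected k V E \<longleftrightarrow> card V \<ge> k + 1 \<and>
     (\<forall>S. S \<subseteq> V \<and> card S \<le> k - 1 \<longrightarrow> connected_graph (V - S) (induced E (V - S)))"

definition colouring :: "nat \<Rightarrow> 'a set \<Rightarrow> ('a \<Rightarrow> 'a \<Rightarrow> bool) \<Rightarrow> ('a \<Rightarrow> nat) \<Rightarrow> bool" where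
  "colouring k V E c \<longleftrightarrow> (\<forall>x\<in>V. c x \<in> {1..k}) \<and> (\<forall>x y. E x y \<longrightarrow> c x \<noteq> c y)"

definition colourable :: "nat \<Rightarrow> 'a set \<Rightarrow> ('a \<Rightarrow> 'a \<Rightarrow> bool) \<Rightarrow> bool" where
  "colourable k V E \<longleftrightarrow> (\<exists>c. colouring k V E c)"

definition fragile :: "nat \<Rightarrow> 'a set \<Rightarrow> ('a \<Rightarrow> 'a \<Rightarrow> bool) \<Rightarrow> bool" where
  "fragile m V E \<longleftrightarrow> (\<forall>W F. subgraph W F V E \<and> k_connected 3 W F \<longrightarrow> colourable (m - 1) W F)"

end

theory Submission
  imports Defs
begin

definition CL :: "nat \<Rightarrow> 'a set \<Rightarrow> ('a \<Rightarrow> 'a \<Rightarrow> bool) \<Rightarrow> bool" where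
  "CL m V E \<longleftrightarrow> (\<forall>x\<in>V. \<forall>y\<in>V. x \<noteq> y \<and> \<not> E x y \<longrightarrow> (\<exists>c. colouring m V E c \<and> c x = c y))
    \<and> (\<forall>x\<in>V. \<forall>y\<in>V. x \<noteq> y \<longrightarrow> (\<exists>c. colouring m V E c \<and> c x \<noteq> c y))
    \<and> (\<forall>x\<in>V. \<forall>y\<in>V. \<forall>z\<in>V. x \<noteq> y \<and> x \<noteq> z \<and> y \<noteq> z \<longrightarrow>
         (\<exists>c. colouring m V E c \<and> c x \<notin> {c y, c z}))
    \<and> (\<forall>x\<in>V. \<forall>y\<in>V. \<forall>z\<in>V. x \<noteq> y \<and> x \<noteq> z \<and> y \<noteq> z \<and> \<not> (E x y \<and> E x z \<and> E y z) \<longrightarrow>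
         (\<exists>c. colouring m V E c \<and> card {c x, c y, c z} = 2))"

lemma CL1: "CL m V E \<Longrightarrow> x \<in> V \<Longrightarrow> y \<in> V \<Longrightarrow> x \<noteq> y \<Longrightarrow> \<not> E x y \<Longrightarrow> \<exists>c. colouring m V E c \<and> c x = c y"
  unfolding CL_def by blast
lemma CL2: "CL m V E \<Longrightarrow> x \<in> V \<Longrightarrow> y \<in> V \<Longrightarrow> x \<noteq> y \<Longrightarrow> \<exists>c. colouring m V E c \<and> c x \<noteq> c y"
  unfolding CL_def by blast
lemma CL3: "CL m V E \<Longrightarrow> x \<in> V \<Longrightarrow> y \<in> V \<Longrightarrow> z \<in> V \<Longrightarrow> x \<noteq> y \<Longrightarrow> x \<noteq> z \<Longrightarrow> y \<noteq> z
   \<Longrightarrow> \<exists>c. colouring m V E c \<and> c x \<noteq> c y \<and> c x \<noteq> c z"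
  unfolding CL_def by blast
lemma CL4: "CL m V E \<Longrightarrow> x \<in> V \<Longrightarrow> y \<in> V \<Longrightarrow> z \<in> V \<Longrightarrow> x \<noteq> y \<Longrightarrow> x \<noteq> z \<Longrightarrow> y \<noteq> z
   \<Longrightarrow> \<not> (E x y \<and> E x z \<and> E y z) \<Longrightarrow> \<exists>c. colouring m V E c \<and> card {c x, c y, c z} = 2"
  unfolding CL_def by blast

lemma col_range: "colouring m V E c \<Longrightarrow> x \<in> V \<Longrightarrow> c x \<in> {1..m}"
  unfolding colouring_def by blast
lemma col_edge: "colouring m V E c \<Longrightarrow> E x y \<Longrightarrow> c x \<noteq> c y"
  unfolding colouring_def by blast

lemma induced_simp[simp]: "induced E U x y \<longleftrightarrow> E x y \<and> x \<in> U \<and> y \<in> U"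
  unfolding induced_def by simp

lemma induced_induced[simp]: "induced (induced E U) U = induced E U"
  unfolding induced_def by auto

lemma graph_induced: "graph V E \<Longrightarrow> W \<subseteq> V \<Longrightarrow> graph W (induced E W)"
  unfolding graph_def by (auto intro: finite_subset)

lemma fragile_induced: "graph V E \<Longrightarrow> fragile m V E \<Longrightarrow> W \<subseteq> V \<Longrightarrow> fragile m W (induced E W)"
  unfolding fragile_def subgraph_def by auto

lemma card3: "card {p, q, r::nat} = 2 \<longleftrightarrow> (p = q \<and> q \<noteq> r) \<or> (p = r \<and> q \<noteq> r) \<or> (q = r \<and> p \<noteq> q)"
  by (auto simp: card_insert_if)

lemma free_gen: "finite X \<Longrightarrow> card X < m \<Longrightarrow> \<exists>k. k \<in> {1..m} \<and> k \<notin> X"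
proof (rule ccontr)
  assume a: "finite X" "card X < m" "\<not> (\<exists>k. k \<in> {1..m} \<and> k \<notin> X)"
  then have "{1..m} \<subseteq> X" by auto
  then have "card {1..m} \<le> card X" using a(1) card_mono by blast
  then show False using a(2) by simp
qed

lemma card_le3: "card {p, q, r} \<le> 3"
  by (auto simp: card_insert_if)

lemma card_le4: "card {p, q, r, s} \<le> 4"
  by (auto simp: card_insert_if)

lemma free3: "(m::nat) \<ge> 4 \<Longrightarrow> \<exists>k. k \<in> {1..m} \<and> k \<noteq> p \<and> k \<noteq> q \<and> k \<noteq> r"
  using free_gen[of "{p,q,r}" m] card_le3[of p q r] by auto

lemma free4: "(m::nat) \<ge> 4 \<Longrightarrow> (m \<ge> 5 \<or> p = q \<or> p = r \<or> p = s \<or> q = r \<or> q = s \<or> r = s)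
   \<Longrightarrow> \<exists>k. k \<in> {1..m} \<and> k \<noteq> p \<and> k \<noteq> q \<and> k \<noteq> r \<and> k \<noteq> s"
proof -
  assume a: "m \<ge> 4" "(m \<ge> 5 \<or> p = q \<or> p = r \<or> p = s \<or> q = r \<or> q = s \<or> r = s)"
  have "card {p,q,r,s} < m"
  proof (cases "m \<ge> 5")
    case True then show ?thesis using card_le4[of p q r s] by linarith
  next
    case False
    then have "p = q \<or> p = r \<or> p = s \<or> q = r \<or> q = s \<or> r = s" using a by auto
    then have "card {p,q,r,s} \<le> 3" using card_le3 by (elim disjE) (auto simp: insert_commute)
    then show ?thesis using a by linarith
  qed
  then show ?thesis using free_gen[of "{p,q,r,s}" m] by auto
qed

lemma perm_ext:
  assumes "finite U" "D \<subseteq> U" "inj_on f D" "f ` D \<subseteq> U"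
  shows "\<exists>\<pi>. bij_betw \<pi> U U \<and> (\<forall>x\<in>D. \<pi> x = f x)"
proof -
  have fD: "finite D" using assms finite_subset by blast
  have "card (f ` D) = card D" using assms(3) card_image by blast
  then have "card (U - D) = card (U - f ` D)"
    using assms fD by (simp add: card_Diff_subset finite_subset)
  then obtain g where g: "bij_betw g (U - D) (U - f ` D)"
    using assms by (meson finite_Diff finite_same_card_bij)
  define \<pi> where "\<pi> = (\<lambda>x. if x \<in> D then f x else g x)"
  have b1: "bij_betw \<pi> D (f ` D)" unfolding \<pi>_def
    using assms(3) by (simp add: bij_betw_def inj_on_def)
  have b2: "bij_betw \<pi> (U - D) (U - f ` D)" unfolding \<pi>_def
    using g by (rule bij_betw_cong[THEN iffD1, rotated]) auto
  have "bij_betw \<pi> (D \<union> (U - D)) (f ` D \<union> (U - f ` D))"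
    using bij_betw_combine[OF b1 b2] by blast
  moreover have "D \<union> (U - D) = U" "f ` D \<union> (U - f ` D) = U" using assms by auto
  ultimately show ?thesis unfolding \<pi>_def by auto
qed

lemma graph_sym: "graph V E \<Longrightarrow> E x y \<Longrightarrow> E y x"
  unfolding graph_def by blast
lemma graph_irr: "graph V E \<Longrightarrow> \<not> E x x"
  unfolding graph_def by blast
lemma graph_in: "graph V E \<Longrightarrow> E x y \<Longrightarrow> x \<in> V \<and> y \<in> V"
  unfolding graph_def by blast
lemma graph_fin: "graph V E \<Longrightarrow> finite V"
  unfolding graph_def by blast

lemma spare_col:
  assumes "colouring (m-1) V E c0" "m \<ge> 2" "\<forall>u\<in>I. \<forall>w\<in>I. \<not> E u w" "graph V E"
  shows "colouring m V E (\<lambda>v. if v \<in> I then m else c0 v)"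
  unfolding colouring_def
proof (intro conjI allI impI ballI)
  fix v assume "v \<in> V" then show "(if v \<in> I then m else c0 v) \<in> {1..m}"
    using assms(1,2) unfolding colouring_def by auto
next
  fix u w assume e: "E u w"
  have uw: "u \<in> V" "w \<in> V" using e assms(4) graph_in by metis+
  have "c0 u \<noteq> c0 w" using assms(1) e unfolding colouring_def by blast
  moreover have "c0 u \<le> m - 1" "c0 w \<le> m - 1" using assms(1) uw unfolding colouring_def by auto
  ultimately show "(if u \<in> I then m else c0 u) \<noteq> (if w \<in> I then m else c0 w)"
    using assms(2,3) e uw by auto
qed


lemma base_3conn:
  assumes m: "m \<ge> 4" and g: "graph V E" and f: "fragile m V E" and k: "k_connected 3 V E"
  shows "CL m V E"
proof -
  have "subgraph V E V E" using g unfolding subgraph_def by auto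
  then have "colourable (m-1) V E" using f k unfolding fragile_def by blast
  then obtain c0 where c0: "colouring (m-1) V E c0" unfolding colourable_def by blast
  have rng: "\<And>v. v \<in> V \<Longrightarrow> c0 v \<le> m - 1" using c0 unfolding colouring_def by auto
  have m2: "m \<ge> 2" using m by simp
  show ?thesis unfolding CL_def
  proof (intro conjI ballI impI)
    fix x y assume xy: "x \<in> V" "y \<in> V" "x \<noteq> y \<and> \<not> E x y"
    let ?c = "\<lambda>v. if v \<in> {x,y} then m else c0 v"
    have "\<not> E y x" using xy graph_sym[OF g] by blast
    then have "\<forall>u\<in>{x,y}. \<forall>w\<in>{x,y}. \<not> E u w" using xy graph_irr[OF g] by auto
    then have "colouring m V E ?c" by (rule spare_col[OF c0 m2 _ g])
    then show "\<exists>c. colouring m V E c \<and> c x = c y" by (intro exI[of _ ?c]) simp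
  next
    fix x y assume xy: "x \<in> V" "y \<in> V" "x \<noteq> y"
    let ?c = "\<lambda>v. if v \<in> {x} then m else c0 v"
    have "colouring m V E ?c" by (rule spare_col[OF c0 m2 _ g]) (use graph_irr[OF g] in simp)
    moreover have "?c x \<noteq> ?c y" using xy rng[of y] m by auto
    ultimately show "\<exists>c. colouring m V E c \<and> c x \<noteq> c y" by blast
  next
    fix x y z assume xy: "x \<in> V" "y \<in> V" "z \<in> V" "x \<noteq> y \<and> x \<noteq> z \<and> y \<noteq> z"
    let ?c = "\<lambda>v. if v \<in> {x} then m else c0 v"
    have "colouring m V E ?c" by (rule spare_col[OF c0 m2 _ g]) (use graph_irr[OF g] in simp)
    moreover have "?c x \<notin> {?c y, ?c z}" using xy rng[of y] rng[of z] m by auto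
    ultimately show "\<exists>c. colouring m V E c \<and> c x \<notin> {c y, c z}" by blast
  next
    fix x y z assume xy: "x \<in> V" "y \<in> V" "z \<in> V" "x \<noteq> y \<and> x \<noteq> z \<and> y \<noteq> z \<and> \<not> (E x y \<and> E x z \<and> E y z)"
    have gen: "\<exists>c. colouring m V E c \<and> card {c p, c q, c r} = 2"
      if "p \<in> V" "q \<in> V" "r \<in> V" "p \<noteq> q" "p \<noteq> r" "q \<noteq> r" "\<not> E p q" for p q r
    proof -
      let ?c = "\<lambda>v. if v \<in> {p,q} then m else c0 v"
      have "colouring m V E ?c" by (rule spare_col[OF c0 m2 _ g]) (use that graph_irr[OF g] graph_sym[OF g] in blast)
      moreover have "card {?c p, ?c q, ?c r} = 2" using that rng[of r] m by (auto simp: card_insert_if)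
      ultimately show ?thesis by blast
    qed
    from xy consider "\<not> E x y" | "\<not> E x z" | "\<not> E y z" by blast
    then show "\<exists>c. colouring m V E c \<and> card {c x, c y, c z} = 2"
    proof cases
      case 1 then show ?thesis using gen[of x y z] xy by auto
    next
      case 2 then show ?thesis using gen[of x z y] xy by (auto simp: insert_commute)
    next
      case 3 then show ?thesis using gen[of y z x] xy by (auto simp: insert_commute)
    qed
  qed
qed


lemma small_others: "finite V \<Longrightarrow> card V \<le> 3 \<Longrightarrow> x \<in> V \<Longrightarrow> y \<in> V \<Longrightarrow> x \<noteq> y
  \<Longrightarrow> u \<in> V - {x,y} \<Longrightarrow> w \<in> V - {x,y} \<Longrightarrow> u = w"
proof (rule ccontr)
  assume a: "finite V" "card V \<le> 3" "x \<in> V" "y \<in> V" "x \<noteq> y" "u \<in> V - {x,y}" "w \<in> V - {x,y}" "u \<noteq> w"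
  have s: "{x,y,u,w} \<subseteq> V" using a by blast
  have "card {x,y,u,w} = 4" using a by auto
  moreover have "card {x,y,u,w} \<le> card V" using card_mono[OF a(1) s] .
  ultimately show False using a(2) by linarith
qed

lemma base_small:
  assumes m: "m \<ge> 4" and g: "graph V E" and cV: "card V \<le> 3"
  shows "CL m V E"
proof -
  have fin: "finite V" using g graph_fin by blast
  have merge: "colouring m V E (\<lambda>v. if v = p \<or> v = q then 1 else 2)"
    if "p \<in> V" "q \<in> V" "p \<noteq> q" "\<not> E p q" for p q
    unfolding colouring_def
  proof (intro conjI allI impI ballI)
    fix v assume "v \<in> V" then show "(if v = p \<or> v = q then 1 else 2) \<in> {1..m}" using m by auto
  next
    fix u w assume e: "E u w"
    have uw: "u \<in> V" "w \<in> V" "u \<noteq> w" using e g graph_in graph_irr by metis+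
    show "(if u = p \<or> u = q then 1::nat else 2) \<noteq> (if w = p \<or> w = q then 1 else 2)"
    proof
      assume eq: "(if u = p \<or> u = q then 1::nat else 2) = (if w = p \<or> w = q then 1 else 2)"
      show False
      proof (cases "u = p \<or> u = q")
        case True
        then have "w = p \<or> w = q" using eq by (auto split: if_splits)
        then show False using True e uw that g graph_sym by metis
      next
        case False
        then have "\<not>(w = p \<or> w = q)" using eq by (auto split: if_splits)
        then show False using False uw small_others[OF fin cV that(1,2,3), of u w] by auto
      qed
    qed
  qed
  have three: "colouring m V E (\<lambda>v. if v = p then 1 else if v = q then 2 else 3)"
    if "p \<in> V" "q \<in> V" "p \<noteq> q" for p q
    unfolding colouring_def
  proof (intro conjI allI impI ballI)
    fix v assume "v \<in> V" then show "(if v = p then 1 else if v = q then 2 else 3) \<in> {1..m}" using m by auto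
  next
    fix u w assume e: "E u w"
    have uw: "u \<in> V" "w \<in> V" "u \<noteq> w" using e g graph_in graph_irr by metis+
    show "(if u = p then 1::nat else if u = q then 2 else 3) \<noteq> (if w = p then 1 else if w = q then 2 else 3)"
      using uw small_others[OF fin cV that(1,2,3), of u w] by (auto split: if_splits)
  qed
  show ?thesis unfolding CL_def
  proof (intro conjI ballI impI)
    fix x y assume xy: "x \<in> V" "y \<in> V" "x \<noteq> y \<and> \<not> E x y"
    then have "colouring m V E (\<lambda>v. if v = x \<or> v = y then 1 else 2)" using merge[of x y] by blast
    then show "\<exists>c. colouring m V E c \<and> c x = c y" by (intro exI[of _ "\<lambda>v. if v = x \<or> v = y then 1 else 2"]) simp
  next
    fix x y assume xy: "x \<in> V" "y \<in> V" "x \<noteq> y"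
    then have "colouring m V E (\<lambda>v. if v = x then 1 else if v = y then 2 else 3)" using three[of x y] by blast
    then show "\<exists>c. colouring m V E c \<and> c x \<noteq> c y" by (intro exI[of _ "\<lambda>v. if v = x then 1 else if v = y then 2 else 3"]) (use xy in auto)
  next
    fix x y z assume xy: "x \<in> V" "y \<in> V" "z \<in> V" "x \<noteq> y \<and> x \<noteq> z \<and> y \<noteq> z"
    then have "colouring m V E (\<lambda>v. if v = x then 1 else if v = y then 2 else 3)" using three[of x y] by blast
    then show "\<exists>c. colouring m V E c \<and> c x \<notin> {c y, c z}" by (intro exI[of _ "\<lambda>v. if v = x then 1 else if v = y then 2 else 3"]) (use xy in auto)
  next
    fix x y z assume xy: "x \<in> V" "y \<in> V" "z \<in> V" "x \<noteq> y \<and> x \<noteq> z \<and> y \<noteq> z \<and> \<not> (E x y \<and> E x z \<and> E y z)"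
    from xy consider "\<not> E x y" | "\<not> E x z" | "\<not> E y z" by blast
    then show "\<exists>c. colouring m V E c \<and> card {c x, c y, c z} = 2"
    proof cases
      case 1 then show ?thesis using merge[of x y] xy by (intro exI[of _ "\<lambda>v. if v = x \<or> v = y then 1 else 2"]) (auto simp: card_insert_if)
    next
      case 2 then show ?thesis using merge[of x z] xy by (intro exI[of _ "\<lambda>v. if v = x \<or> v = z then 1 else 2"]) (auto simp: card_insert_if)
    next
      case 3 then show ?thesis using merge[of y z] xy by (intro exI[of _ "\<lambda>v. if v = y \<or> v = z then 1 else 2"]) (auto simp: card_insert_if)
    qed
  qed
qed


lemma noK4:
  assumes g: "graph V E" and f: "fragile 4 V E" and in4: "p \<in> V" "q \<in> V" "r \<in> V" "s \<in> V"
    and e: "E p q" "E p r" "E p s" "E q r" "E q s" "E r s"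
  shows False
proof -
  define W where "W = {p,q,r,s}"
  have d: "p \<noteq> q" "p \<noteq> r" "p \<noteq> s" "q \<noteq> r" "q \<noteq> s" "r \<noteq> s"
    using e g graph_irr by metis+
  have WV: "W \<subseteq> V" using in4 W_def by auto
  have sub: "subgraph W (induced E W) V E" unfolding subgraph_def using graph_induced[OF g WV] WV by auto
  have cW: "card W = 4" using d unfolding W_def by auto
  have e2: "E q p" "E r p" "E s p" "E r q" "E s q" "E s r" using e g graph_sym by metis+
  have adj: "\<And>u w. u \<in> W \<Longrightarrow> w \<in> W \<Longrightarrow> u \<noteq> w \<Longrightarrow> E u w"
    using e e2 unfolding W_def by auto
  have "k_connected 3 W (induced E W)"
    unfolding k_connected_def
  proof (intro conjI allI impI)
    show "3 + 1 \<le> card W" using cW by simp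
  next
    fix S assume S: "S \<subseteq> W \<and> card S \<le> 3 - 1"
    have fW: "finite W" unfolding W_def by simp
    have "card (W - S) \<ge> 2" using S cW fW card_Diff_subset[of S W] finite_subset[of S W] by auto
    have ne: "W - S \<noteq> {}"
    proof
      assume h: "W - S = {}"
      have "card (W - S) = 0" unfolding h by simp
      then show False using \<open>card (W - S) \<ge> 2\<close> by simp
    qed
    show "connected_graph (W - S) (induced (induced E W) (W - S))"
      unfolding connected_graph_def
    proof (intro conjI ballI)
      show "W - S \<noteq> {}" by (rule ne)
    next
      fix u w assume uw: "u \<in> W - S" "w \<in> W - S"
      show "(induced (induced (induced E W) (W - S)) (W - S))\<^sup>*\<^sup>* u w"
      proof (cases "u = w")
        case True then show ?thesis by simp
      next
        case False
        then have "induced (induced (induced E W) (W - S)) (W - S) u w" using uw adj by auto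
        then show ?thesis by blast
      qed
    qed
  qed
  then have "colourable 3 W (induced E W)" using f sub unfolding fragile_def by force
  then obtain c where c: "colouring 3 W (induced E W) c" unfolding colourable_def by blast
  have "c ` W \<subseteq> {1..3}" using c unfolding colouring_def by auto
  moreover have "inj_on c W"
  proof (rule inj_onI)
    fix u w assume "u \<in> W" "w \<in> W" "c u = c w"
    then show "u = w" using adj c WV unfolding colouring_def by fastforce
  qed
  ultimately have "card W \<le> card {1..3::nat}" using card_inj_on_le by blast
  then show False using cW by simp
qed

definition sep :: "'a set \<Rightarrow> ('a \<Rightarrow> 'a \<Rightarrow> bool) \<Rightarrow> 'a set \<Rightarrow> 'a set \<Rightarrow> 'a \<Rightarrow> 'a \<Rightarrow> bool" where
  "sep V E A B a b \<longleftrightarrow> a \<noteq> b \<and> A \<noteq> {} \<and> B \<noteq> {} \<and> V = A \<union> B \<union> {a,b} \<and> A \<inter> B = {}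
     \<and> a \<notin> A \<and> a \<notin> B \<and> b \<notin> A \<and> b \<notin> B
     \<and> (\<forall>x y. E x y \<longrightarrow> \<not> (x \<in> A \<and> y \<in> B) \<and> \<not> (x \<in> B \<and> y \<in> A))"

definition psep :: "'a set \<Rightarrow> ('a \<Rightarrow> 'a \<Rightarrow> bool) \<Rightarrow> 'a set \<Rightarrow> 'a set \<Rightarrow> 'a set \<Rightarrow> bool" where
  "psep V E A B S \<longleftrightarrow> V = A \<union> B \<union> S \<and> A \<inter> B = {} \<and> A \<inter> S = {} \<and> B \<inter> S = {} \<and> A \<noteq> {} \<and> B \<noteq> {}
     \<and> (\<forall>x y. E x y \<longrightarrow> \<not> (x \<in> A \<and> y \<in> B) \<and> \<not> (x \<in> B \<and> y \<in> A))"

lemma psep_sym: "psep V E A B S \<Longrightarrow> psep V E B A S"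
  unfolding psep_def by blast

lemma grow_A:
  assumes fin: "finite V" and p: "psep V E A B S" and cA: "card A \<ge> 2"
  shows "\<exists>A' B' S'. psep V E A' B' S' \<and> card S' = Suc (card S)"
proof -
  obtain w where w: "w \<in> A" using p unfolding psep_def by blast
  have fA: "finite A" "finite S" using fin p unfolding psep_def by auto
  have "card (A - {w}) \<ge> 1" using cA w fA by simp
  then have ne: "A - {w} \<noteq> {}" by (metis card.empty not_one_le_zero)
  have "psep V E (A - {w}) B (insert w S)" using p w ne unfolding psep_def by blast
  moreover have "w \<notin> S" using w p unfolding psep_def by blast
  then have "card (insert w S) = Suc (card S)" using fA(2) by simp
  ultimately show ?thesis by blast
qed

lemma grow:
  assumes fin: "finite V" and cV: "card V \<ge> 4" and p: "psep V E A B S" and cS: "card S < 2"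
  shows "\<exists>A' B' S'. psep V E A' B' S' \<and> card S' = Suc (card S)"
proof -
  have fs: "finite A" "finite B" "finite S" using fin p unfolding psep_def by auto
  have "card V = card A + card B + card S"
  proof -
    have "V = A \<union> B \<union> S" "A \<inter> B = {}" "(A \<union> B) \<inter> S = {}" using p unfolding psep_def by auto
    then show ?thesis using fs by (simp add: card_Un_disjoint)
  qed
  then have "card A \<ge> 2 \<or> card B \<ge> 2" using cV cS by linarith
  then show ?thesis
  proof
    assume "card A \<ge> 2" then show ?thesis using grow_A[OF fin p] by blast
  next
    assume "card B \<ge> 2" then show ?thesis using grow_A[OF fin psep_sym[OF p]] by blast
  qed
qed

lemma to2:
  assumes fin: "finite V" and cV: "card V \<ge> 4" and p: "psep V E A B S" and cS: "card S \<le> 2"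
  shows "\<exists>A B S. psep V E A B S \<and> card S = 2"
proof -
  consider "card S = 2" | "card S = 1" | "card S = 0" using cS by linarith
  then show ?thesis
  proof cases
    case 1 then show ?thesis using p by blast
  next
    case 2
    then have "card S < 2" by simp
    then obtain A1 B1 S1 where "psep V E A1 B1 S1" "card S1 = Suc (card S)" using grow[OF fin cV p] by blast
    then show ?thesis using 2 by (intro exI[of _ A1] exI[of _ B1] exI[of _ S1]) simp
  next
    case 3
    then have "card S < 2" by simp
    then obtain A1 B1 S1 where p1: "psep V E A1 B1 S1" "card S1 = Suc (card S)" using grow[OF fin cV p] by blast
    then have "card S1 < 2" using 3 by simp
    then obtain A2 B2 S2 where "psep V E A2 B2 S2" "card S2 = Suc (card S1)" using grow[OF fin cV p1(1)] by blast
    then show ?thesis using 3 p1 by (intro exI[of _ A2] exI[of _ B2] exI[of _ S2]) simp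
  qed
qed

lemma psep_sep: "psep V E A B S \<Longrightarrow> card S = 2 \<Longrightarrow> \<exists>a b. sep V E A B a b"
proof -
  assume p: "psep V E A B S" and c: "card S = 2"
  then obtain a b where "S = {a,b}" "a \<noteq> b" unfolding card_2_iff by blast
  then have "sep V E A B a b" using p unfolding psep_def sep_def by blast
  then show ?thesis by blast
qed

lemma sep_exists:
  assumes g: "graph V E" and cV: "card V \<ge> 4" and nk: "\<not> k_connected 3 V E"
  shows "\<exists>A B a b. sep V E A B a b"
proof -
  have fin: "finite V" using g graph_fin by blast
  obtain S where S: "S \<subseteq> V" "card S \<le> 2" and nc: "\<not> connected_graph (V - S) (induced E (V - S))"
    using nk cV unfolding k_connected_def by auto
  define R where "R = induced E (V - S)"
  have "card (V - S) \<ge> 2" using S cV fin card_Diff_subset[of S V] finite_subset[of S V] by auto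
  then have ne: "V - S \<noteq> {}" by (metis card.empty not_numeral_le_zero)
  then obtain x y where xy: "x \<in> V - S" "y \<in> V - S" "\<not> R\<^sup>*\<^sup>* x y"
    using nc unfolding connected_graph_def R_def by auto
  define B where "B = {w \<in> V - S. R\<^sup>*\<^sup>* x w}"
  define A where "A = (V - S) - B"
  have "psep V E A B S"
    unfolding psep_def
  proof (intro conjI allI impI)
    show "V = A \<union> B \<union> S" using S unfolding A_def B_def by blast
    show "A \<inter> B = {}" "A \<inter> S = {}" "B \<inter> S = {}" unfolding A_def B_def by auto
    show "A \<noteq> {}" using xy unfolding A_def B_def by auto
    show "B \<noteq> {}" using xy unfolding B_def by auto
  next
    fix p q assume e: "E p q"
    show "\<not> (p \<in> A \<and> q \<in> B)"
    proof
      assume pq: "p \<in> A \<and> q \<in> B"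
      have "E q p" using e g graph_sym by metis
      then have "R q p" using pq unfolding R_def A_def B_def by auto
      moreover have "R\<^sup>*\<^sup>* x q" using pq unfolding B_def by blast
      ultimately have "R\<^sup>*\<^sup>* x p" by (rule rtranclp.rtrancl_into_rtrancl[rotated])
      then show False using pq unfolding A_def B_def by auto
    qed
    show "\<not> (p \<in> B \<and> q \<in> A)"
    proof
      assume pq: "p \<in> B \<and> q \<in> A"
      have "R p q" using e pq unfolding R_def A_def B_def by auto
      moreover have "R\<^sup>*\<^sup>* x p" using pq unfolding B_def by blast
      ultimately have "R\<^sup>*\<^sup>* x q" by (rule rtranclp.rtrancl_into_rtrancl[rotated])
      then show False using pq unfolding A_def B_def by auto
    qed
  qed
  then obtain A' B' S' where "psep V E A' B' S'" "card S' = 2" using to2[OF fin cV _ S(2)] by blast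
  then show ?thesis using psep_sep by blast
qed

lemma sep_swapAB: assumes "sep V E A B a b" shows "sep V E B A a b"
proof -
  have e: "B \<union> A \<union> {a,b} = A \<union> B \<union> {a,b}" "B \<inter> A = A \<inter> B" by blast+
  show ?thesis using assms unfolding sep_def e by meson
qed
lemma sep_swapab: assumes "sep V E A B a b" shows "sep V E A B b a"
proof -
  have e: "{b,a} = {a,b}" by blast
  show ?thesis using assms unfolding sep_def e by meson
qed

lemma sep_card:
  assumes g: "graph V E" and s: "sep V E A B a b"
  shows "card (A \<union> {a,b}) < card V" "A \<union> {a,b} \<subseteq> V"
proof -
  have fin: "finite V" using g graph_fin by blast
  show sub: "A \<union> {a,b} \<subseteq> V" using s unfolding sep_def by auto
  obtain w where w: "w \<in> B" using s unfolding sep_def by blast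
  have "w \<notin> A \<union> {a,b}" "w \<in> V" using s w unfolding sep_def by auto
  then have "A \<union> {a,b} \<subset> V" using sub by blast
  then show "card (A \<union> {a,b}) < card V" using fin by (rule psubset_card_mono[rotated])
qed

definition tEf :: "nat \<Rightarrow> 'a set \<Rightarrow> ('a \<Rightarrow> 'a \<Rightarrow> bool) \<Rightarrow> 'a \<Rightarrow> 'a \<Rightarrow> 'a \<Rightarrow> bool" where
  "tEf m W F y p q \<longleftrightarrow> (\<exists>c. colouring m W F c \<and> c y \<noteq> c p \<and> c y \<noteq> c q \<and> c p = c q)"
definition tD :: "nat \<Rightarrow> 'a set \<Rightarrow> ('a \<Rightarrow> 'a \<Rightarrow> bool) \<Rightarrow> 'a \<Rightarrow> 'a \<Rightarrow> 'a \<Rightarrow> bool" where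
  "tD m W F y p q \<longleftrightarrow> (\<exists>c. colouring m W F c \<and> c y \<noteq> c p \<and> c y \<noteq> c q \<and> c p \<noteq> c q)"
definition tE :: "nat \<Rightarrow> 'a set \<Rightarrow> ('a \<Rightarrow> 'a \<Rightarrow> bool) \<Rightarrow> 'a \<Rightarrow> 'a \<Rightarrow> 'a \<Rightarrow> bool" where
  "tE m W F y p q \<longleftrightarrow> (\<exists>c. colouring m W F c \<and> c y = c p \<and> c p \<noteq> c q)"
definition tF :: "nat \<Rightarrow> 'a set \<Rightarrow> ('a \<Rightarrow> 'a \<Rightarrow> bool) \<Rightarrow> 'a \<Rightarrow> 'a \<Rightarrow> 'a \<Rightarrow> bool" where
  "tF m W F y p q \<longleftrightarrow> (\<exists>c. colouring m W F c \<and> c y = c p \<and> c p = c q)"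

lemma Bside:
  assumes cl: "CL m W F" and in3: "y \<in> W" "p \<in> W" "q \<in> W" and d: "y \<noteq> p" "y \<noteq> q" "p \<noteq> q"
    and np: "\<not> F p q"
  shows "(tEf m W F y p q \<and> tD m W F y p q)
       \<or> (tEf m W F y p q \<and> tE m W F y p q \<and> tE m W F y q p)
       \<or> (tD m W F y p q \<and> tF m W F y p q \<and> tE m W F y p q)
       \<or> (tD m W F y p q \<and> tF m W F y p q \<and> tE m W F y q p)"
proof -
  have A1: "tD m W F y p q \<or> tEf m W F y p q"
  proof -
    obtain c where c: "colouring m W F c" "c y \<noteq> c p" "c y \<noteq> c q" using CL3[OF cl in3 d] by blast
    then show ?thesis unfolding tD_def tEf_def by (cases "c p = c q") blast+
  qed
  have A2: "tEf m W F y p q \<or> tE m W F y p q \<or> tE m W F y q p"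
  proof -
    obtain c where c: "colouring m W F c" "card {c y, c p, c q} = 2" using CL4[OF cl in3 d] np by blast
    then have "(c y = c p \<and> c p \<noteq> c q) \<or> (c y = c q \<and> c p \<noteq> c q) \<or> (c p = c q \<and> c y \<noteq> c p)"
      using card3 by metis
    then show ?thesis unfolding tEf_def tE_def using c(1) by metis
  qed
  have A3: "tEf m W F y p q \<or> tF m W F y p q"
  proof -
    obtain c where c: "colouring m W F c" "c p = c q" using CL1[OF cl in3(2,3) d(3) np] by blast
    then show ?thesis unfolding tF_def tEf_def by (cases "c y = c p") auto
  qed
  have A4: "tD m W F y p q \<or> tE m W F y q p"
  proof -
    obtain c where c: "colouring m W F c" "c p \<noteq> c y" "c p \<noteq> c q" using CL3[OF cl in3(2,1,3)] d by metis
    then show ?thesis unfolding tD_def tE_def by (cases "c y = c q") auto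
  qed
  have A5: "tD m W F y p q \<or> tE m W F y p q"
  proof -
    obtain c where c: "colouring m W F c" "c q \<noteq> c y" "c q \<noteq> c p" using CL3[OF cl in3(3,1,2)] d by metis
    then show ?thesis unfolding tD_def tE_def by (cases "c y = c p") auto
  qed
  show ?thesis using A1 A2 A3 A4 A5 by blast
qed

locale gctx =
  fixes m :: nat and V :: "'a set" and E :: "'a \<Rightarrow> 'a \<Rightarrow> bool" and A B :: "'a set" and a b :: 'a
  assumes m4: "m \<ge> 4" and gr: "graph V E" and fr: "fragile m V E" and sp: "sep V E A B a b"
    and CLA: "CL m (A \<union> {a,b}) (induced E (A \<union> {a,b}))"
    and CLB: "CL m (B \<union> {a,b}) (induced E (B \<union> {a,b}))"
begin

lemma swapAB: "gctx m V E B A a b"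
  using m4 gr fr sep_swapAB[OF sp] CLA CLB by unfold_locales auto

lemma swapab: "gctx m V E A B b a"
proof -
  have e1: "A \<union> {b,a} = A \<union> {a,b}" and e2: "B \<union> {b,a} = B \<union> {a,b}" by auto
  show ?thesis unfolding gctx_def e1 e2 using m4 gr fr sep_swapab[OF sp] CLA CLB by blast
qed

lemma sfacts: "a \<noteq> b" "a \<notin> A" "a \<notin> B" "b \<notin> A" "b \<notin> B" "A \<inter> B = {}" "V = A \<union> B \<union> {a,b}"
  "A \<noteq> {}" "B \<noteq> {}"
  using sp unfolding sep_def by auto

lemma noedge: "E x y \<Longrightarrow> x \<in> A \<Longrightarrow> y \<in> B \<Longrightarrow> False" "E x y \<Longrightarrow> x \<in> B \<Longrightarrow> y \<in> A \<Longrightarrow> False"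
  using sp unfolding sep_def by auto

lemma glue_map:
  assumes c1: "colouring m (A \<union> {a,b}) (induced E (A \<union> {a,b})) c1"
    and c2: "colouring m (B \<union> {a,b}) (induced E (B \<union> {a,b})) c2"
    and D: "D \<subseteq> {1..m}" "c2 a \<in> D" "c2 b \<in> D" and inj: "inj_on f D" and fD: "f ` D \<subseteq> {1..m}"
    and fa: "f (c2 a) = c1 a" and fb: "f (c2 b) = c1 b"
  shows "\<exists>c. colouring m V E c \<and> (\<forall>v\<in>A \<union> {a,b}. c v = c1 v) \<and> (\<forall>v\<in>B \<union> {a,b}. c2 v \<in> D \<longrightarrow> c v = f (c2 v))"
proof -
  obtain \<pi> where pi: "bij_betw \<pi> {1..m} {1..m}" "\<forall>x\<in>D. \<pi> x = f x"
    using perm_ext[of "{1..m}" D f] D inj fD by auto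
  define c where "c = (\<lambda>v. if v \<in> A \<union> {a,b} then c1 v else \<pi> (c2 v))"
  have cV2: "c v = \<pi> (c2 v)" if "v \<in> B \<union> {a,b}" for v
  proof (cases "v \<in> A \<union> {a,b}")
    case True
    then have "v = a \<or> v = b" using that sfacts by blast
    then show ?thesis using True pi D fa fb unfolding c_def by auto
  next
    case False then show ?thesis unfolding c_def by simp
  qed
  have pim: "\<pi> x \<in> {1..m}" if "x \<in> {1..m}" for x using pi(1) that bij_betwE by blast
  have pinj: "inj_on \<pi> {1..m}" using pi(1) bij_betw_def by blast
  have "colouring m V E c"
    unfolding colouring_def
  proof (intro conjI ballI allI impI)
    fix v assume v: "v \<in> V"
    show "c v \<in> {1..m}"
    proof (cases "v \<in> A \<union> {a,b}")
      case True then show ?thesis using c1 col_range unfolding c_def by fastforce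
    next
      case False
      then have "v \<in> B \<union> {a,b}" using v sfacts by blast
      then show ?thesis using cV2 pim c2 col_range by metis
    qed
  next
    fix x y assume e: "E x y"
    have xy: "x \<in> V" "y \<in> V" using e gr graph_in by metis+
    show "c x \<noteq> c y"
    proof (cases "x \<in> A \<union> {a,b} \<and> y \<in> A \<union> {a,b}")
      case True
      then have "induced E (A \<union> {a,b}) x y" using e by simp
      then show ?thesis using True c1 col_edge unfolding c_def by fastforce
    next
      case False
      have "x \<in> B \<union> {a,b} \<and> y \<in> B \<union> {a,b}"
        using False xy sfacts noedge[OF e] by blast
      then have i: "induced E (B \<union> {a,b}) x y" "x \<in> B \<union> {a,b}" "y \<in> B \<union> {a,b}" using e by auto
      have "c2 x \<noteq> c2 y" using c2 i(1) col_edge by metis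
      moreover have "c2 x \<in> {1..m}" "c2 y \<in> {1..m}" using c2 i col_range by metis+
      ultimately have "\<pi> (c2 x) \<noteq> \<pi> (c2 y)" using pinj inj_on_eq_iff by metis
      then show ?thesis using cV2 i by metis
    qed
  qed
  moreover have "\<forall>v\<in>A \<union> {a,b}. c v = c1 v" unfolding c_def by simp
  moreover have "\<forall>v\<in>B \<union> {a,b}. c2 v \<in> D \<longrightarrow> c v = f (c2 v)" using cV2 pi by auto
  ultimately show ?thesis by blast
qed

lemma glue_y:
  assumes c1: "colouring m (A \<union> {a,b}) (induced E (A \<union> {a,b})) c1"
    and c2: "colouring m (B \<union> {a,b}) (induced E (B \<union> {a,b})) c2"
    and pat: "c1 a = c1 b \<longleftrightarrow> c2 a = c2 b" and y: "y \<in> B" and k: "k \<in> {1..m}"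
    and ka: "c2 y = c2 a \<Longrightarrow> k = c1 a" and kb: "c2 y = c2 b \<Longrightarrow> k = c1 b"
    and kn: "c2 y \<noteq> c2 a \<Longrightarrow> c2 y \<noteq> c2 b \<Longrightarrow> k \<noteq> c1 a \<and> k \<noteq> c1 b"
  shows "\<exists>c. colouring m V E c \<and> (\<forall>v\<in>A \<union> {a,b}. c v = c1 v) \<and> c y = k"
proof -
  define f where "f = (\<lambda>z. if z = c2 a then c1 a else if z = c2 b then c1 b else k)"
  have r1: "c1 a \<in> {1..m}" "c1 b \<in> {1..m}" using c1 col_range by fastforce+
  have r2: "c2 a \<in> {1..m}" "c2 b \<in> {1..m}" "c2 y \<in> {1..m}" using c2 y col_range by fastforce+
  have fa: "f (c2 a) = c1 a" and fb: "f (c2 b) = c1 b" unfolding f_def using pat by auto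
  have fy: "f (c2 y) = k" unfolding f_def using ka kb by auto
  have h1: "c2 y = c2 a" if "k = c1 a"
  proof (rule ccontr)
    assume n: "c2 y \<noteq> c2 a"
    show False
    proof (cases "c2 y = c2 b")
      case True
      then have "k = c1 b" by (rule kb)
      then have "c1 a = c1 b" using that by simp
      then have "c2 a = c2 b" using pat by simp
      then show False using n True by simp
    next
      case False then show False using kn[OF n False] that by simp
    qed
  qed
  have h2: "c2 y = c2 b" if "k = c1 b"
  proof (rule ccontr)
    assume n: "c2 y \<noteq> c2 b"
    show False
    proof (cases "c2 y = c2 a")
      case True
      then have "k = c1 a" by (rule ka)
      then have "c1 a = c1 b" using that by simp
      then have "c2 a = c2 b" using pat by simp
      then show False using n True by simp
    next
      case False then show False using kn[OF False n] that by simp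
    qed
  qed
  have inj: "inj_on f {c2 a, c2 b, c2 y}"
  proof (rule inj_onI)
    fix u w assume u: "u \<in> {c2 a, c2 b, c2 y}" and w: "w \<in> {c2 a, c2 b, c2 y}" and e: "f u = f w"
    from u w show "u = w"
    proof (elim insertE emptyE)
      assume "u = c2 a" "w = c2 b" then show ?thesis using e fa fb pat by simp
    next
      assume "u = c2 b" "w = c2 a" then show ?thesis using e fa fb pat by simp
    next
      assume "u = c2 a" "w = c2 y" then show ?thesis using e fa fy h1 by simp
    next
      assume "u = c2 y" "w = c2 a" then show ?thesis using e fa fy h1 by simp
    next
      assume "u = c2 b" "w = c2 y" then show ?thesis using e fb fy h2 by simp
    next
      assume "u = c2 y" "w = c2 b" then show ?thesis using e fb fy h2 by simp
    qed simp_all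
  qed
  have fD: "f ` {c2 a, c2 b, c2 y} \<subseteq> {1..m}" using fa fb fy r1 k by auto
  obtain c where c: "colouring m V E c" "\<forall>v\<in>A \<union> {a,b}. c v = c1 v"
    "\<forall>v\<in>B \<union> {a,b}. c2 v \<in> {c2 a, c2 b, c2 y} \<longrightarrow> c v = f (c2 v)"
    using glue_map[OF c1 c2 _ _ _ inj fD fa fb] r2 by auto
  have "c y = f (c2 y)" using c(3) y by auto
  then show ?thesis using c fy by auto
qed

lemma lift1:
  assumes c1: "colouring m (A \<union> {a,b}) (induced E (A \<union> {a,b})) c1"
  shows "\<exists>c. colouring m V E c \<and> (\<forall>v\<in>A \<union> {a,b}. c v = c1 v)"
proof -
  have inB: "a \<in> B \<union> {a,b}" "b \<in> B \<union> {a,b}" by auto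
  obtain c2 where c2: "colouring m (B \<union> {a,b}) (induced E (B \<union> {a,b})) c2" and pat: "c1 a = c1 b \<longleftrightarrow> c2 a = c2 b"
  proof (cases "c1 a = c1 b")
    case True
    then have "\<not> E a b" using c1 col_edge[OF c1, of a b] by auto
    then obtain c2 where "colouring m (B \<union> {a,b}) (induced E (B \<union> {a,b})) c2" "c2 a = c2 b"
      using CL1[OF CLB inB sfacts(1)] by auto
    then show ?thesis using that True by blast
  next
    case False
    obtain c2 where "colouring m (B \<union> {a,b}) (induced E (B \<union> {a,b})) c2" "c2 a \<noteq> c2 b"
      using CL2[OF CLB inB sfacts(1)] by auto
    then show ?thesis using that False by blast
  qed
  define f where "f = (\<lambda>z. if z = c2 a then c1 a else c1 b)"
  have r1: "c1 a \<in> {1..m}" "c1 b \<in> {1..m}" using c1 col_range by fastforce+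
  have r2: "c2 a \<in> {1..m}" "c2 b \<in> {1..m}" using c2 col_range by fastforce+
  have inj: "inj_on f {c2 a, c2 b}" unfolding inj_on_def f_def using pat by auto
  have fD: "f ` {c2 a, c2 b} \<subseteq> {1..m}" unfolding f_def using r1 by auto
  have fa: "f (c2 a) = c1 a" and fb: "f (c2 b) = c1 b" unfolding f_def using pat by auto
  show ?thesis using glue_map[OF c1 c2 _ _ _ inj fD fa fb] r2 by auto
qed

end

lemma (in gctx) lift2:
  assumes c2: "colouring m (B \<union> {a,b}) (induced E (B \<union> {a,b})) c2"
  shows "\<exists>c. colouring m V E c \<and> (\<forall>v\<in>B \<union> {a,b}. c v = c2 v)"
  using gctx.lift1[OF swapAB c2] .

lemma tD_sym: "tD m W F y p q \<Longrightarrow> tD m W F y q p" unfolding tD_def by auto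
lemma tF_sym: "tF m W F y p q \<Longrightarrow> tF m W F y q p" unfolding tF_def by auto
lemma tEf_sym: "tEf m W F y p q \<Longrightarrow> tEf m W F y q p" unfolding tEf_def by auto

context gctx begin

abbreviation "V1 \<equiv> A \<union> {a,b}"
abbreviation "V2 \<equiv> B \<union> {a,b}"
abbreviation "col1 c \<equiv> colouring m V1 (induced E V1) c"
abbreviation "col2 c \<equiv> colouring m V2 (induced E V2) c"

lemma c1_1: "x \<in> V1 \<Longrightarrow> y \<in> V1 \<Longrightarrow> x \<noteq> y \<Longrightarrow> \<not> E x y \<Longrightarrow> \<exists>c. col1 c \<and> c x = c y"
  using CL1[OF CLA] by simp
lemma c1_2: "x \<in> V1 \<Longrightarrow> y \<in> V1 \<Longrightarrow> x \<noteq> y \<Longrightarrow> \<exists>c. col1 c \<and> c x \<noteq> c y"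
  using CL2[OF CLA] by simp
lemma c1_3: "x \<in> V1 \<Longrightarrow> y \<in> V1 \<Longrightarrow> z \<in> V1 \<Longrightarrow> x \<noteq> y \<Longrightarrow> x \<noteq> z \<Longrightarrow> y \<noteq> z
   \<Longrightarrow> \<exists>c. col1 c \<and> c x \<noteq> c y \<and> c x \<noteq> c z"
  using CL3[OF CLA] by simp
lemma c1_4: "x \<in> V1 \<Longrightarrow> y \<in> V1 \<Longrightarrow> z \<in> V1 \<Longrightarrow> x \<noteq> y \<Longrightarrow> x \<noteq> z \<Longrightarrow> y \<noteq> z
   \<Longrightarrow> \<not> (E x y \<and> E x z \<and> E y z) \<Longrightarrow> \<exists>c. col1 c \<and> card {c x, c y, c z} = 2"
proof -
  assume a: "x \<in> V1" "y \<in> V1" "z \<in> V1" "x \<noteq> y" "x \<noteq> z" "y \<noteq> z" "\<not> (E x y \<and> E x z \<and> E y z)"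
  then have "\<not> (induced E V1 x y \<and> induced E V1 x z \<and> induced E V1 y z)" by simp
  then show ?thesis using CL4[OF CLA a(1-6)] by blast
qed
lemma c1_edge: "col1 c \<Longrightarrow> E x y \<Longrightarrow> x \<in> V1 \<Longrightarrow> y \<in> V1 \<Longrightarrow> c x \<noteq> c y"
  using col_edge[of m V1 "induced E V1" c x y] by simp
lemma c1_rng: "col1 c \<Longrightarrow> x \<in> V1 \<Longrightarrow> c x \<in> {1..m}"
  using col_range by metis

lemma ab_in: "a \<in> V1" "b \<in> V1" "a \<in> V2" "b \<in> V2" by auto

lemma gEf:
  assumes t: "tEf m V2 (induced E V2) y a b" and c1: "col1 c1" and eq: "c1 a = c1 b"
    and k: "k \<in> {1..m}" "k \<noteq> c1 a" and y: "y \<in> B"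
  shows "\<exists>c. colouring m V E c \<and> (\<forall>v\<in>V1. c v = c1 v) \<and> c y = k"
proof -
  obtain c2 where c2: "col2 c2" "c2 y \<noteq> c2 a" "c2 y \<noteq> c2 b" "c2 a = c2 b" using t unfolding tEf_def by blast
  show ?thesis by (rule glue_y[OF c1 c2(1) _ y k(1)]) (use c2 eq k in auto)
qed

lemma gD:
  assumes t: "tD m V2 (induced E V2) y a b" and c1: "col1 c1" and ne: "c1 a \<noteq> c1 b"
    and k: "k \<in> {1..m}" "k \<noteq> c1 a" "k \<noteq> c1 b" and y: "y \<in> B"
  shows "\<exists>c. colouring m V E c \<and> (\<forall>v\<in>V1. c v = c1 v) \<and> c y = k"
proof -
  obtain c2 where c2: "col2 c2" "c2 y \<noteq> c2 a" "c2 y \<noteq> c2 b" "c2 a \<noteq> c2 b" using t unfolding tD_def by blast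
  show ?thesis by (rule glue_y[OF c1 c2(1) _ y k(1)]) (use c2 ne k in auto)
qed

lemma gE:
  assumes t: "tE m V2 (induced E V2) y a b" and c1: "col1 c1" and ne: "c1 a \<noteq> c1 b" and y: "y \<in> B"
  shows "\<exists>c. colouring m V E c \<and> (\<forall>v\<in>V1. c v = c1 v) \<and> c y = c1 a"
proof -
  obtain c2 where c2: "col2 c2" "c2 y = c2 a" "c2 a \<noteq> c2 b" using t unfolding tE_def by blast
  have k: "c1 a \<in> {1..m}" using c1_rng[OF c1] by simp
  show ?thesis by (rule glue_y[OF c1 c2(1) _ y k]) (use c2 ne in auto)
qed

lemma gE':
  assumes t: "tE m V2 (induced E V2) y b a" and c1: "col1 c1" and ne: "c1 a \<noteq> c1 b" and y: "y \<in> B"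
  shows "\<exists>c. colouring m V E c \<and> (\<forall>v\<in>V1. c v = c1 v) \<and> c y = c1 b"
proof -
  obtain c2 where c2: "col2 c2" "c2 y = c2 b" "c2 b \<noteq> c2 a" using t unfolding tE_def by blast
  have k: "c1 b \<in> {1..m}" using c1_rng[OF c1] by simp
  show ?thesis by (rule glue_y[OF c1 c2(1) _ y k]) (use c2 ne in auto)
qed

lemma gF:
  assumes t: "tF m V2 (induced E V2) y a b" and c1: "col1 c1" and eq: "c1 a = c1 b" and y: "y \<in> B"
  shows "\<exists>c. colouring m V E c \<and> (\<forall>v\<in>V1. c v = c1 v) \<and> c y = c1 a"
proof -
  obtain c2 where c2: "col2 c2" "c2 y = c2 a" "c2 a = c2 b" using t unfolding tF_def by blast
  have k: "c1 a \<in> {1..m}" using c1_rng[OF c1] by simp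
  show ?thesis by (rule glue_y[OF c1 c2(1) _ y k]) (use c2 eq in auto)
qed

lemma side2_adj:
  assumes "E a b" "y \<in> B"
  shows "tD m V2 (induced E V2) y a b"
proof -
  have "y \<noteq> a" "y \<noteq> b" using assms sfacts by auto
  then obtain c where c: "col2 c" "c y \<noteq> c a" "c y \<noteq> c b"
    using CL3[OF CLB, of y a b] assms sfacts by auto
  have "c a \<noteq> c b" using col_edge[OF c(1), of a b] assms by simp
  then show ?thesis unfolding tD_def using c by blast
qed

lemma side2_types:
  assumes "\<not> E a b" "y \<in> B"
  shows "(tEf m V2 (induced E V2) y a b \<and> tD m V2 (induced E V2) y a b)
       \<or> (tEf m V2 (induced E V2) y a b \<and> tE m V2 (induced E V2) y a b \<and> tE m V2 (induced E V2) y b a)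
       \<or> (tD m V2 (induced E V2) y a b \<and> tF m V2 (induced E V2) y a b \<and> tE m V2 (induced E V2) y a b)
       \<or> (tD m V2 (induced E V2) y a b \<and> tF m V2 (induced E V2) y a b \<and> tE m V2 (induced E V2) y b a)"
proof -
  have "y \<noteq> a" "y \<noteq> b" "y \<in> V2" using assms sfacts by auto
  then show ?thesis using Bside[OF CLB, of y a b] assms sfacts by auto
qed

lemma side1_types:
  assumes "\<not> E a b" "x \<in> A"
  shows "(tEf m V1 (induced E V1) x a b \<and> tD m V1 (induced E V1) x a b)
       \<or> (tEf m V1 (induced E V1) x a b \<and> tE m V1 (induced E V1) x a b \<and> tE m V1 (induced E V1) x b a)
       \<or> (tD m V1 (induced E V1) x a b \<and> tF m V1 (induced E V1) x a b \<and> tE m V1 (induced E V1) x a b)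
       \<or> (tD m V1 (induced E V1) x a b \<and> tF m V1 (induced E V1) x a b \<and> tE m V1 (induced E V1) x b a)"
proof -
  have "x \<noteq> a" "x \<noteq> b" "x \<in> V1" using assms sfacts by auto
  then show ?thesis using Bside[OF CLA, of x a b] assms sfacts by auto
qed

end

context gctx begin

lemma inA: "u \<in> A \<Longrightarrow> u \<in> V1 \<and> u \<noteq> a \<and> u \<noteq> b \<and> u \<notin> B" using sfacts by auto
lemma inB: "y \<in> B \<Longrightarrow> y \<in> V2 \<and> y \<noteq> a \<and> y \<noteq> b \<and> y \<notin> A" using sfacts by auto

lemma core1:
  assumes x: "x \<in> A" and y: "y \<in> B"
  shows "\<exists>c. colouring m V E c \<and> c x = c y"
proof (cases "E a b")
  case True
  obtain c1 where c1: "col1 c1" "c1 x \<noteq> c1 a" "c1 x \<noteq> c1 b" using c1_3[of x a b] inA[OF x] sfacts by auto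
  have ne: "c1 a \<noteq> c1 b" using c1_edge[OF c1(1) True] by simp
  obtain c where "colouring m V E c" "\<forall>v\<in>V1. c v = c1 v" "c y = c1 x"
    using gD[OF side2_adj[OF True y] c1(1) ne c1_rng[OF c1(1)] _ _ y] c1 inA[OF x] by blast
  then show ?thesis using x by auto
next
  case False
  note T2 = side2_types[OF False y] and T1 = side1_types[OF False x]
  have mEf: ?thesis if t1: "tEf m V1 (induced E V1) x a b" and t2: "tEf m V2 (induced E V2) y a b"
  proof -
    obtain c1 where c1: "col1 c1" "c1 x \<noteq> c1 a" "c1 x \<noteq> c1 b" "c1 a = c1 b" using t1 unfolding tEf_def by blast
    obtain c where "colouring m V E c" "\<forall>v\<in>V1. c v = c1 v" "c y = c1 x"
      using gEf[OF t2 c1(1) c1(4) c1_rng[OF c1(1)] _ y] c1 inA[OF x] by blast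
    then show ?thesis using x by auto
  qed
  have mD: ?thesis if t1: "tD m V1 (induced E V1) x a b" and t2: "tD m V2 (induced E V2) y a b"
  proof -
    obtain c1 where c1: "col1 c1" "c1 x \<noteq> c1 a" "c1 x \<noteq> c1 b" "c1 a \<noteq> c1 b" using t1 unfolding tD_def by blast
    obtain c where "colouring m V E c" "\<forall>v\<in>V1. c v = c1 v" "c y = c1 x"
      using gD[OF t2 c1(1) c1(4) c1_rng[OF c1(1)] _ _ y] c1 inA[OF x] by blast
    then show ?thesis using x by auto
  qed
  have mEa: ?thesis if t1: "tE m V1 (induced E V1) x a b" and t2: "tE m V2 (induced E V2) y a b"
  proof -
    obtain c1 where c1: "col1 c1" "c1 x = c1 a" "c1 a \<noteq> c1 b" using t1 unfolding tE_def by blast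
    obtain c where "colouring m V E c" "\<forall>v\<in>V1. c v = c1 v" "c y = c1 a"
      using gE[OF t2 c1(1) c1(3) y] by blast
    then show ?thesis using x c1 by auto
  qed
  have mEb: ?thesis if t1: "tE m V1 (induced E V1) x b a" and t2: "tE m V2 (induced E V2) y b a"
  proof -
    obtain c1 where c1: "col1 c1" "c1 x = c1 b" "c1 b \<noteq> c1 a" using t1 unfolding tE_def by blast
    obtain c where "colouring m V E c" "\<forall>v\<in>V1. c v = c1 v" "c y = c1 b"
      using gE'[OF t2 c1(1) _ y] c1 by metis
    then show ?thesis using x c1 by auto
  qed
  have mF: ?thesis if t1: "tF m V1 (induced E V1) x a b" and t2: "tF m V2 (induced E V2) y a b"
  proof -
    obtain c1 where c1: "col1 c1" "c1 x = c1 a" "c1 a = c1 b" using t1 unfolding tF_def by blast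
    obtain c where "colouring m V E c" "\<forall>v\<in>V1. c v = c1 v" "c y = c1 a"
      using gF[OF t2 c1(1) c1(3) y] by blast
    then show ?thesis using x c1 by auto
  qed
  show ?thesis using T1 T2 mEf mD mEa mEb mF by blast
qed

lemma core3b:
  assumes u: "u \<in> A" and e: "e \<in> V1" "e \<noteq> u" and y: "y \<in> B"
  shows "\<exists>c. colouring m V E c \<and> c u \<noteq> c y \<and> c u \<noteq> c e"
proof -
  define s where "s = (if e = a then b else a)"
  have s: "s \<in> V1" "s \<noteq> e" "s \<noteq> u" "s = a \<or> s = b" using inA[OF u] sfacts unfolding s_def by auto
  obtain c1 where c1: "col1 c1" "c1 u \<noteq> c1 e" "c1 u \<noteq> c1 s"
    using c1_3[of u e s] inA[OF u] e s by auto
  have cs: "c1 u \<noteq> c1 a" if "c1 a = c1 b" using s c1 that by auto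
  have fin: ?thesis if "\<exists>c. colouring m V E c \<and> (\<forall>v\<in>V1. c v = c1 v) \<and> c y = k" "k \<noteq> c1 u" for k
  proof -
    note h = that
    obtain c where c: "colouring m V E c" "\<forall>v\<in>V1. c v = c1 v" "c y = k" using h(1) by blast
    have "c u = c1 u" "c e = c1 e" using c(2) inA[OF u] e by auto
    then show ?thesis using c h(2) c1(2) by (intro exI[of _ c]) auto
  qed
  show ?thesis
  proof (cases "c1 a = c1 b")
    case True
    have "tEf m V2 (induced E V2) y a b \<or> tF m V2 (induced E V2) y a b"
    proof (cases "E a b")
      case True2: True
      then show ?thesis using c1_edge[OF c1(1) True2] True by simp
    next
      case False
      then show ?thesis using side2_types[OF False y] by blast
    qed
    then show ?thesis
    proof
      assume t: "tEf m V2 (induced E V2) y a b"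
      obtain k where k: "k \<in> {1..m}" "k \<noteq> c1 a" "k \<noteq> c1 u" using free3[OF m4, of "c1 a" "c1 u" "c1 u"] by auto
      show ?thesis by (rule fin[OF gEf[OF t c1(1) True k(1,2) y]]) (use k in simp)
    next
      assume t: "tF m V2 (induced E V2) y a b"
      show ?thesis by (rule fin[OF gF[OF t c1(1) True y]]) (use cs True in auto)
    qed
  next
    case False
    have "tD m V2 (induced E V2) y a b \<or> (tE m V2 (induced E V2) y a b \<and> tE m V2 (induced E V2) y b a)"
    proof (cases "E a b")
      case True2: True
      then show ?thesis using side2_adj[OF True2 y] by blast
    next
      case False2: False
      then show ?thesis using side2_types[OF False2 y] by blast
    qed
    then show ?thesis
    proof
      assume t: "tD m V2 (induced E V2) y a b"
      obtain k where k: "k \<in> {1..m}" "k \<noteq> c1 a" "k \<noteq> c1 b" "k \<noteq> c1 u" using free3[OF m4] by blast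
      show ?thesis by (rule fin[OF gD[OF t c1(1) False k(1,2,3) y]]) (use k in simp)
    next
      assume t: "tE m V2 (induced E V2) y a b \<and> tE m V2 (induced E V2) y b a"
      show ?thesis
      proof (cases "s = a")
        case True
        show ?thesis by (rule fin[OF gE[OF conjunct1[OF t] c1(1) False y]]) (use c1 True in auto)
      next
        case False2: False
        then have "s = b" using s by blast
        then show ?thesis by (intro fin[OF gE'[OF conjunct2[OF t] c1(1) False y]]) (use c1 in auto)
      qed
    qed
  qed
qed

lemma core3c:
  assumes u: "u \<in> A" and y: "y \<in> B"
  shows "\<exists>c. colouring m V E c \<and> c a \<noteq> c y \<and> c a \<noteq> c u"
proof -
  have fin: ?thesis if "\<exists>c. colouring m V E c \<and> (\<forall>v\<in>V1. c v = c1 v) \<and> c y = k" "k \<noteq> c1 a" "c1 a \<noteq> c1 u" for k c1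
  proof -
    note h = that
    obtain c where c: "colouring m V E c" "\<forall>v\<in>V1. c v = c1 v" "c y = k" using h(1) by blast
    have "c u = c1 u" "c a = c1 a" using c(2) inA[OF u] by auto
    then show ?thesis using c h(2,3) by (intro exI[of _ c]) auto
  qed
  show ?thesis
  proof (cases "E a b")
    case True
    obtain c1 where c1: "col1 c1" "c1 a \<noteq> c1 u" using c1_2[of a u] inA[OF u] by auto
    have ne: "c1 a \<noteq> c1 b" using c1_edge[OF c1(1) True] by simp
    obtain k where k: "k \<in> {1..m}" "k \<noteq> c1 a" "k \<noteq> c1 b" using free3[OF m4] by blast
    show ?thesis by (rule fin[OF gD[OF side2_adj[OF True y] c1(1) ne k y]]) (use k c1 in auto)
  next
    case False
    obtain c1 where c1: "col1 c1" "c1 a \<noteq> c1 u" "c1 a \<noteq> c1 b" using c1_3[of a u b] inA[OF u] sfacts by auto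
    have "tD m V2 (induced E V2) y a b \<or> tE m V2 (induced E V2) y b a"
      using side2_types[OF False y] by blast
    then show ?thesis
    proof
      assume t: "tD m V2 (induced E V2) y a b"
      obtain k where k: "k \<in> {1..m}" "k \<noteq> c1 a" "k \<noteq> c1 b" using free3[OF m4] by blast
      show ?thesis by (rule fin[OF gD[OF t c1(1) c1(3) k y]]) (use k c1 in auto)
    next
      assume t: "tE m V2 (induced E V2) y b a"
      show ?thesis by (rule fin[OF gE'[OF t c1(1) c1(3) y]]) (use c1 in auto)
    qed
  qed
qed

end

context gctx begin

lemma core3a_M3:
  assumes nab: "\<not> E a b" and tD2: "tD m V2 (induced E V2) y a b" and tF2: "tF m V2 (induced E V2) y a b"
    and tE2: "tE m V2 (induced E V2) y a b"
    and y: "y \<in> B" and e: "e1 \<in> V1" "e2 \<in> V1" "e1 \<noteq> e2"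
  shows "\<exists>c. colouring m V E c \<and> c y \<noteq> c e1 \<and> c y \<noteq> c e2"
proof (cases "e1 \<in> {a,b} \<or> e2 \<in> {a,b}")
  case True
  obtain c1 where c1: "col1 c1" "c1 a \<noteq> c1 b" using c1_2[of a b] sfacts by auto
  have "c1 a = c1 e1 \<or> c1 b = c1 e1 \<or> c1 a = c1 e2 \<or> c1 b = c1 e2" using True by auto
  then obtain k where k: "k \<in> {1..m}" "k \<noteq> c1 a" "k \<noteq> c1 b" "k \<noteq> c1 e1" "k \<noteq> c1 e2"
    using free4[OF m4, of "c1 a" "c1 b" "c1 e1" "c1 e2"] by blast
  obtain c where c: "colouring m V E c" "\<forall>v\<in>V1. c v = c1 v" "c y = k"
    using gD[OF tD2 c1 k(1-3) y] by blast
  then show ?thesis using e k by (intro exI[of _ c]) auto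
next
  case False
  then have d: "a \<noteq> e1" "a \<noteq> e2" by auto
  obtain c1 where c1: "col1 c1" "c1 a \<noteq> c1 e1" "c1 a \<noteq> c1 e2" using c1_3[of a e1 e2] e d by auto
  obtain c where c: "colouring m V E c" "\<forall>v\<in>V1. c v = c1 v" "c y = c1 a"
    using gF[OF tF2 c1(1) _ y] gE[OF tE2 c1(1) _ y] by blast
  then show ?thesis using e c1 by (intro exI[of _ c]) auto
qed

lemma core3a:
  assumes y: "y \<in> B" and e: "e1 \<in> V1" "e2 \<in> V1" "e1 \<noteq> e2"
  shows "\<exists>c. colouring m V E c \<and> c y \<noteq> c e1 \<and> c y \<noteq> c e2"
proof (cases "E a b")
  case True
  have "\<exists>c1. col1 c1 \<and> (\<exists>k. k \<in> {1..m} \<and> k \<noteq> c1 a \<and> k \<noteq> c1 b \<and> k \<noteq> c1 e1 \<and> k \<noteq> c1 e2)"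
  proof (cases "e1 \<in> {a,b} \<or> e2 \<in> {a,b} \<or> m \<ge> 5")
    case True
    obtain c1 where c1: "col1 c1" "c1 a \<noteq> c1 b" using c1_2[of a b] sfacts by auto
    have "m \<ge> 5 \<or> c1 a = c1 e1 \<or> c1 b = c1 e1 \<or> c1 a = c1 e2 \<or> c1 b = c1 e2" using True by auto
    then show ?thesis using free4[OF m4, of "c1 a" "c1 b" "c1 e1" "c1 e2"] c1 by blast
  next
    case False
    then have eA: "e1 \<in> A" "e2 \<in> A" "e1 \<noteq> a" "e1 \<noteq> b" "e2 \<noteq> a" "e2 \<noteq> b" using e by auto
    have m: "m = 4" using False m4 by simp
    have "\<exists>c1. col1 c1 \<and> (c1 a = c1 e1 \<or> c1 b = c1 e1 \<or> c1 a = c1 e2 \<or> c1 b = c1 e2 \<or> c1 e1 = c1 e2)"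
    proof -
      have "\<not> E e1 e2 \<or> \<not> E e1 a \<or> \<not> E e1 b \<or> \<not> E e2 a \<or> \<not> E e2 b"
      proof (rule ccontr)
        assume "\<not> (\<not> E e1 e2 \<or> \<not> E e1 a \<or> \<not> E e1 b \<or> \<not> E e2 a \<or> \<not> E e2 b)"
        then have "E e1 e2" "E e1 a" "E e1 b" "E e2 a" "E e2 b" by auto
        moreover have "e1 \<in> V" "e2 \<in> V" "a \<in> V" "b \<in> V" using eA sfacts by auto
        moreover have "fragile 4 V E" using fr m by simp
        ultimately show False using noK4[OF gr] True by blast
      qed
      then show ?thesis
      proof (elim disjE)
        assume "\<not> E e1 e2" then show ?thesis using c1_1[of e1 e2] e by blast
      next
        assume "\<not> E e1 a" then show ?thesis using c1_1[of e1 a] e eA by (metis ab_in(1))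
      next
        assume "\<not> E e1 b" then show ?thesis using c1_1[of e1 b] e eA by (metis ab_in(2))
      next
        assume "\<not> E e2 a" then show ?thesis using c1_1[of e2 a] e eA by (metis ab_in(1))
      next
        assume "\<not> E e2 b" then show ?thesis using c1_1[of e2 b] e eA by (metis ab_in(2))
      qed
    qed
    then obtain c1 where c1: "col1 c1" "c1 a = c1 e1 \<or> c1 b = c1 e1 \<or> c1 a = c1 e2 \<or> c1 b = c1 e2 \<or> c1 e1 = c1 e2"
      by blast
    then show ?thesis using free4[OF m4, of "c1 a" "c1 b" "c1 e1" "c1 e2"] by blast
  qed
  then obtain c1 k where c1: "col1 c1" and k: "k \<in> {1..m}" "k \<noteq> c1 a" "k \<noteq> c1 b" "k \<noteq> c1 e1" "k \<noteq> c1 e2"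
    by blast
  have ne: "c1 a \<noteq> c1 b" using c1_edge[OF c1 True] by simp
  obtain c where c: "colouring m V E c" "\<forall>v\<in>V1. c v = c1 v" "c y = k"
    using gD[OF side2_adj[OF True y] c1 ne k(1-3) y] by blast
  then show ?thesis using e k by (intro exI[of _ c]) auto
next
  case False
  note T = side2_types[OF False y]
  show ?thesis
  proof (cases "tEf m V2 (induced E V2) y a b")
    case True
    obtain c1 where c1: "col1 c1" "c1 a = c1 b" using c1_1[of a b] sfacts False by auto
    obtain k where k: "k \<in> {1..m}" "k \<noteq> c1 a" "k \<noteq> c1 e1" "k \<noteq> c1 e2" using free3[OF m4] by blast
    obtain c where c: "colouring m V E c" "\<forall>v\<in>V1. c v = c1 v" "c y = k"
      using gEf[OF True c1 k(1,2) y] by blast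
    then show ?thesis using e k by (intro exI[of _ c]) auto
  next
    case nEf: False
    then have "(tD m V2 (induced E V2) y a b \<and> tF m V2 (induced E V2) y a b \<and> tE m V2 (induced E V2) y a b)
       \<or> (tD m V2 (induced E V2) y a b \<and> tF m V2 (induced E V2) y a b \<and> tE m V2 (induced E V2) y b a)"
      using T by blast
    then show ?thesis
    proof
      assume "tD m V2 (induced E V2) y a b \<and> tF m V2 (induced E V2) y a b \<and> tE m V2 (induced E V2) y a b"
      then show ?thesis using core3a_M3[OF False _ _ _ y e] by blast
    next
      assume h: "tD m V2 (induced E V2) y a b \<and> tF m V2 (induced E V2) y a b \<and> tE m V2 (induced E V2) y b a"
      have eq: "A \<union> {b,a} = A \<union> {a,b}" "B \<union> {b,a} = B \<union> {a,b}" by auto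
      have "\<not> E b a" using False gr graph_sym by metis
      moreover have "tD m V2 (induced E V2) y b a" by (rule tD_sym) (use h in blast)
      moreover have "tF m V2 (induced E V2) y b a" by (rule tF_sym) (use h in blast)
      ultimately show ?thesis using gctx.core3a_M3[OF swapab, unfolded eq, of y e1 e2] h y e by blast
    qed
  qed
qed

end

context gctx begin

lemma core4_M3:
  assumes nab: "\<not> E a b" and tD2: "tD m V2 (induced E V2) y a b" and tF2: "tF m V2 (induced E V2) y a b"
    and tE2: "tE m V2 (induced E V2) y a b"
    and u: "u \<in> A" and v: "v \<in> V1" "v \<noteq> u" and y: "y \<in> B"
  shows "\<exists>c. colouring m V E c \<and> card {c y, c u, c v} = 2"
proof -
  have uu: "u \<in> V1" "u \<noteq> a" "u \<noteq> b" using inA[OF u] by auto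
  have fin: ?thesis if h: "\<exists>c. colouring m V E c \<and> (\<forall>v\<in>V1. c v = c1 v) \<and> c y = k" "card {k, c1 u, c1 v} = 2" for k c1
  proof -
    obtain c where c: "colouring m V E c" "\<forall>v\<in>V1. c v = c1 v" "c y = k" using h(1) by blast
    have "c u = c1 u" "c v = c1 v" using c(2) uu v by auto
    then show ?thesis using c h(2) by (intro exI[of _ c]) auto
  qed
  show ?thesis
  proof (cases "E u v")
    case False
    note nuv = False
    have "\<exists>c1. col1 c1 \<and> (c1 a = c1 b \<longrightarrow> card {c1 a, c1 u, c1 v} = 2)
        \<and> (c1 a \<noteq> c1 b \<longrightarrow> c1 u \<noteq> c1 v \<longrightarrow> c1 a = c1 u \<or> c1 a = c1 v)"
    proof (cases "v = a")
      case True
      have nt: "\<not> (E u a \<and> E u b \<and> E a b)" using nab by blast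
      obtain c1 where c1: "col1 c1" "card {c1 u, c1 a, c1 b} = 2"
        using c1_4[OF uu(1) ab_in(1) ab_in(2) uu(2) uu(3) sfacts(1) nt] by blast
      have "c1 a = c1 b \<longrightarrow> c1 u \<noteq> c1 a" using c1(2) unfolding card3 by blast
      then have "c1 a = c1 b \<longrightarrow> card {c1 a, c1 u, c1 v} = 2" using True unfolding card3 by blast
      then show ?thesis using c1(1) True by blast
    next
      case vna: False
      have nt: "\<not> (E u v \<and> E u a \<and> E v a)" using nuv by blast
      obtain c1 where c1: "col1 c1" "card {c1 u, c1 v, c1 a} = 2"
        using c1_4[OF uu(1) v(1) ab_in(1) v(2)[symmetric] uu(2) vna nt] by blast
      have "c1 a = c1 b \<longrightarrow> card {c1 a, c1 u, c1 v} = 2" using c1(2) unfolding card3 by auto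
      moreover have "c1 u \<noteq> c1 v \<longrightarrow> c1 a = c1 u \<or> c1 a = c1 v" using c1(2) unfolding card3 by auto
      ultimately show ?thesis using c1(1) by blast
    qed
    then obtain c1 where c1: "col1 c1" and P1: "c1 a = c1 b \<Longrightarrow> card {c1 a, c1 u, c1 v} = 2"
      and P2: "c1 a \<noteq> c1 b \<Longrightarrow> c1 u \<noteq> c1 v \<Longrightarrow> c1 a = c1 u \<or> c1 a = c1 v" by blast
    show ?thesis
    proof (cases "c1 a = c1 b")
      case True
      show ?thesis by (rule fin[OF gF[OF tF2 c1 True y]]) (use P1[OF True] in simp)
    next
      case ne: False
      show ?thesis
      proof (cases "c1 u = c1 v")
        case True
        obtain k where k: "k \<in> {1..m}" "k \<noteq> c1 a" "k \<noteq> c1 b" "k \<noteq> c1 u" using free3[OF m4] by blast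
        have "card {k, c1 u, c1 v} = 2" using k(4) True unfolding card3 by blast
        then show ?thesis by (intro fin[OF gD[OF tD2 c1 ne k(1-3) y]])
      next
        case False
        have "card {c1 a, c1 u, c1 v} = 2" using P2[OF ne False] False unfolding card3 by blast
        then show ?thesis by (intro fin[OF gE[OF tE2 c1 ne y]])
      qed
    qed
  next
    case True
    obtain c1 where c1: "col1 c1" "c1 a \<noteq> c1 b" using c1_2[of a b] sfacts by auto
    have uv: "c1 u \<noteq> c1 v" using c1_edge[OF c1(1) True uu(1) v(1)] .
    show ?thesis
    proof (cases "c1 u \<noteq> c1 a \<and> c1 u \<noteq> c1 b")
      case True
      show ?thesis by (rule fin[OF gD[OF tD2 c1 c1_rng[OF c1(1) uu(1)] _ _ y]]) (use True uv in \<open>auto simp: card3\<close>)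
    next
      case F1: False
      show ?thesis
      proof (cases "c1 v \<noteq> c1 a \<and> c1 v \<noteq> c1 b")
        case True
        show ?thesis by (rule fin[OF gD[OF tD2 c1 c1_rng[OF c1(1) v(1)] _ _ y]]) (use True uv in \<open>auto simp: card3\<close>)
      next
        case False
        then have "c1 a = c1 u \<or> c1 a = c1 v" using F1 uv by auto
        then show ?thesis by (intro fin[OF gE[OF tE2 c1 y]]) (use uv in \<open>auto simp: card3\<close>)
      qed
    qed
  qed
qed

lemma core4:
  assumes u: "u \<in> A" and v: "v \<in> V1" "v \<noteq> u" and y: "y \<in> B"
  shows "\<exists>c. colouring m V E c \<and> card {c y, c u, c v} = 2"
proof -
  have uu: "u \<in> V1" "u \<noteq> a" "u \<noteq> b" using inA[OF u] by auto
  have fin: ?thesis if h: "\<exists>c. colouring m V E c \<and> (\<forall>v\<in>V1. c v = c1 v) \<and> c y = k" "card {k, c1 u, c1 v} = 2" for k c1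
  proof -
    obtain c where c: "colouring m V E c" "\<forall>v\<in>V1. c v = c1 v" "c y = k" using h(1) by blast
    have "c u = c1 u" "c v = c1 v" using c(2) uu v by auto
    then show ?thesis using c h(2) by (intro exI[of _ c]) auto
  qed
  show ?thesis
  proof (cases "E a b")
    case Eab: True
    note tD2 = side2_adj[OF Eab y]
    show ?thesis
    proof (cases "E u v")
      case False
      obtain c1 where c1: "col1 c1" "c1 u = c1 v" using c1_1[of u v] uu v False by auto
      have ne: "c1 a \<noteq> c1 b" using c1_edge[OF c1(1) Eab] by simp
      obtain k where k: "k \<in> {1..m}" "k \<noteq> c1 a" "k \<noteq> c1 b" "k \<noteq> c1 u" using free3[OF m4] by blast
      show ?thesis by (rule fin[OF gD[OF tD2 c1(1) ne k(1-3) y]]) (use k c1 in \<open>simp add: card3\<close>)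
    next
      case True
      obtain c1 where c1: "col1 c1" "c1 u \<noteq> c1 a" "c1 u \<noteq> c1 b" using c1_3[of u a b] uu sfacts by auto
      have ne: "c1 a \<noteq> c1 b" using c1_edge[OF c1(1) Eab] by simp
      have uv: "c1 u \<noteq> c1 v" using c1_edge[OF c1(1) True uu(1) v(1)] .
      show ?thesis by (rule fin[OF gD[OF tD2 c1(1) ne c1_rng[OF c1(1) uu(1)] c1(2,3) y]]) (use uv in \<open>simp add: card3\<close>)
    qed
  next
    case nab: False
    note T = side2_types[OF nab y]
    show ?thesis
    proof (cases "tEf m V2 (induced E V2) y a b")
      case tEf2: True
      have alt: "tD m V2 (induced E V2) y a b \<or> (tE m V2 (induced E V2) y a b \<and> tE m V2 (induced E V2) y b a)"
        using T tEf2 by blast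
      show ?thesis
      proof (cases "E u v")
        case False
        obtain c1 where c1: "col1 c1" "c1 u = c1 v" using c1_1[of u v] uu v False by auto
        show ?thesis
        proof (cases "c1 a = c1 b")
          case True
          obtain k where k: "k \<in> {1..m}" "k \<noteq> c1 a" "k \<noteq> c1 u" using free3[OF m4] by blast
          show ?thesis by (rule fin[OF gEf[OF tEf2 c1(1) True k(1,2) y]]) (use k c1 in \<open>simp add: card3\<close>)
        next
          case ne: False
          from alt show ?thesis
          proof
            assume t: "tD m V2 (induced E V2) y a b"
            obtain k where k: "k \<in> {1..m}" "k \<noteq> c1 a" "k \<noteq> c1 b" "k \<noteq> c1 u" using free3[OF m4] by blast
            show ?thesis by (rule fin[OF gD[OF t c1(1) ne k(1-3) y]]) (use k c1 in \<open>simp add: card3\<close>)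
          next
            assume t: "tE m V2 (induced E V2) y a b \<and> tE m V2 (induced E V2) y b a"
            show ?thesis
            proof (cases "c1 a = c1 u")
              case False
              show ?thesis by (rule fin[OF gE[OF conjunct1[OF t] c1(1) ne y]]) (use False c1 in \<open>simp add: card3\<close>)
            next
              case True
              show ?thesis by (rule fin[OF gE'[OF conjunct2[OF t] c1(1) ne y]]) (use True ne c1 in \<open>simp add: card3\<close>)
            qed
          qed
        qed
      next
        case True
        obtain c1 where c1: "col1 c1" "c1 a = c1 b" using c1_1[of a b] sfacts nab by auto
        have uv: "c1 u \<noteq> c1 v" using c1_edge[OF c1(1) True uu(1) v(1)] .
        define k where "k = (if c1 u \<noteq> c1 a then c1 u else c1 v)"
        have k: "k \<in> {1..m}" "k \<noteq> c1 a" using uv c1_rng[OF c1(1) uu(1)] c1_rng[OF c1(1) v(1)] unfolding k_def by auto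
        have "card {k, c1 u, c1 v} = 2" using uv unfolding k_def by (auto simp: card3)
        then show ?thesis by (intro fin[OF gEf[OF tEf2 c1(1,2) k y]])
      qed
    next
      case nEf: False
      then have "(tD m V2 (induced E V2) y a b \<and> tF m V2 (induced E V2) y a b \<and> tE m V2 (induced E V2) y a b)
         \<or> (tD m V2 (induced E V2) y a b \<and> tF m V2 (induced E V2) y a b \<and> tE m V2 (induced E V2) y b a)"
        using T by blast
      then show ?thesis
      proof
        assume "tD m V2 (induced E V2) y a b \<and> tF m V2 (induced E V2) y a b \<and> tE m V2 (induced E V2) y a b"
        then show ?thesis using core4_M3[OF nab _ _ _ u v y] by blast
      next
        assume h: "tD m V2 (induced E V2) y a b \<and> tF m V2 (induced E V2) y a b \<and> tE m V2 (induced E V2) y b a"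
        have eq: "A \<union> {b,a} = A \<union> {a,b}" "B \<union> {b,a} = B \<union> {a,b}" by auto
        have "\<not> E b a" using nab gr graph_sym by metis
        moreover have "tD m V2 (induced E V2) y b a" by (rule tD_sym) (use h in blast)
        moreover have "tF m V2 (induced E V2) y b a" by (rule tF_sym) (use h in blast)
        ultimately show ?thesis using gctx.core4_M3[OF swapab, unfolded eq, of y u v] h u v y by blast
      qed
    qed
  qed
qed

end

lemma pick3:
  assumes "x \<noteq> y" "x \<noteq> z" "y \<noteq> z" "x \<in> P \<or> y \<in> P \<or> z \<in> P" "x \<in> Q \<or> y \<in> Q \<or> z \<in> Q" "P \<inter> Q = {}"
  shows "\<exists>w u v. w \<in> P \<and> u \<in> Q \<and> v \<noteq> u \<and> v \<noteq> w \<and> {x,y,z} = {w,u,v}"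
  using assms(4,5)
proof (elim disjE)
  assume "x \<in> P" "y \<in> Q" then show ?thesis using assms by (intro exI[of _ x] exI[of _ y] exI[of _ z]) auto
next
  assume "x \<in> P" "z \<in> Q" then show ?thesis using assms by (intro exI[of _ x] exI[of _ z] exI[of _ y]) auto
next
  assume "y \<in> P" "x \<in> Q" then show ?thesis using assms by (intro exI[of _ y] exI[of _ x] exI[of _ z]) auto
next
  assume "y \<in> P" "z \<in> Q" then show ?thesis using assms by (intro exI[of _ y] exI[of _ z] exI[of _ x]) auto
next
  assume "z \<in> P" "x \<in> Q" then show ?thesis using assms by (intro exI[of _ z] exI[of _ x] exI[of _ y]) auto
next
  assume "z \<in> P" "y \<in> Q" then show ?thesis using assms by (intro exI[of _ z] exI[of _ y] exI[of _ x]) auto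
qed (use assms in auto)

lemma G4_of:
  assumes "\<exists>c. colouring m V E c \<and> card {c w, c u, c v} = 2" "{w,u,v} = {x,y,z}"
  shows "\<exists>c. colouring m V E c \<and> card {c x, c y, c z} = 2"
proof -
  obtain c where c: "colouring m V E c" "card {c w, c u, c v} = 2" using assms(1) by blast
  have "{c x, c y, c z} = c ` {x,y,z}" by simp
  also have "\<dots> = c ` {w,u,v}" using assms(2) by simp
  also have "\<dots> = {c w, c u, c v}" by simp
  finally show ?thesis using c by auto
qed

context gctx begin

lemma classify: "v \<in> V \<Longrightarrow> v \<in> A \<or> v \<in> B \<or> v = a \<or> v = b"
  using sfacts by auto

lemma glue_CL: "CL m V E"
  unfolding CL_def
proof (intro conjI ballI impI)
  fix x y assume xy: "x \<in> V" "y \<in> V" "x \<noteq> y \<and> \<not> E x y"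
  show "\<exists>c. colouring m V E c \<and> c x = c y"
  proof (cases "x \<in> V1 \<and> y \<in> V1")
    case True
    obtain c1 where c1: "col1 c1" "c1 x = c1 y" using c1_1[of x y] True xy by auto
    obtain c where "colouring m V E c" "\<forall>v\<in>V1. c v = c1 v" using lift1[OF c1(1)] by blast
    then show ?thesis using True c1 by (intro exI[of _ c]) auto
  next
    case F1: False
    show ?thesis
    proof (cases "x \<in> V2 \<and> y \<in> V2")
      case True
      obtain c2 where c2: "col2 c2" "c2 x = c2 y" using CL1[OF CLB, of x y] True xy by auto
      obtain c where "colouring m V E c" "\<forall>v\<in>V2. c v = c2 v" using lift2[OF c2(1)] by blast
      then show ?thesis using True c2 by (intro exI[of _ c]) auto
    next
      case False
      then have "(x \<in> A \<and> y \<in> B) \<or> (x \<in> B \<and> y \<in> A)" using F1 classify xy by blast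
      then show ?thesis
      proof
        assume "x \<in> A \<and> y \<in> B" then show ?thesis using core1 by blast
      next
        assume "x \<in> B \<and> y \<in> A" then show ?thesis using gctx.core1[OF swapAB] by blast
      qed
    qed
  qed
next
  have G3: "\<exists>c. colouring m V E c \<and> c x \<notin> {c y, c z}"
    if xy: "x \<in> V" "y \<in> V" "z \<in> V" "x \<noteq> y" "x \<noteq> z" "y \<noteq> z" for x y z
  proof (cases "x \<in> V1 \<and> y \<in> V1 \<and> z \<in> V1")
    case True
    obtain c1 where c1: "col1 c1" "c1 x \<noteq> c1 y" "c1 x \<noteq> c1 z" using c1_3[of x y z] True xy by auto
    obtain c where "colouring m V E c" "\<forall>v\<in>V1. c v = c1 v" using lift1[OF c1(1)] by blast
    then show ?thesis using True c1 by (intro exI[of _ c]) auto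
  next
    case F1: False
    show ?thesis
    proof (cases "x \<in> V2 \<and> y \<in> V2 \<and> z \<in> V2")
      case True
      obtain c2 where c2: "col2 c2" "c2 x \<noteq> c2 y" "c2 x \<noteq> c2 z" using CL3[OF CLB, of x y z] True xy by auto
      obtain c where "colouring m V E c" "\<forall>v\<in>V2. c v = c2 v" using lift2[OF c2(1)] by blast
      then show ?thesis using True c2 by (intro exI[of _ c]) auto
    next
      case F2: False
      have inB: "x \<in> B \<or> y \<in> B \<or> z \<in> B" using F1 classify xy by blast
      have inA: "x \<in> A \<or> y \<in> A \<or> z \<in> A" using F2 classify xy by blast
      have sA: "A \<inter> B = {}" using sfacts by blast
      consider "x \<in> B" | "x \<in> A" | "x = a" | "x = b" using classify xy by blast
      then show ?thesis
      proof cases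
        case 1
        show ?thesis
        proof (cases "y \<in> B")
          case True
          then have "z \<in> A" using inA 1 sA xy by blast
          then show ?thesis using gctx.core3b[OF swapAB, of x y z] 1 True xy by auto
        next
          case yB: False
          show ?thesis
          proof (cases "z \<in> B")
            case True
            then have "y \<in> A" using inA 1 sA xy by blast
            then show ?thesis using gctx.core3b[OF swapAB, of x z y] 1 True xy by auto
          next
            case False
            have "y \<in> V1" "z \<in> V1" using yB False classify xy by auto
            then show ?thesis using core3a[of x y z] 1 xy by auto
          qed
        qed
      next
        case 2
        show ?thesis
        proof (cases "y \<in> A")
          case True
          then have "z \<in> B" using inB 2 sA xy by blast
          then show ?thesis using core3b[of x y z] 2 True xy by auto
        next
          case yA: False
          show ?thesis
          proof (cases "z \<in> A")
            case True
            then have "y \<in> B" using inB 2 sA xy by blast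
            then show ?thesis using core3b[of x z y] 2 True xy by auto
          next
            case False
            have "y \<in> V2" "z \<in> V2" using yA False classify xy by auto
            then show ?thesis using gctx.core3a[OF swapAB, of x y z] 2 xy by auto
          qed
        qed
      next
        case 3
        then have "(y \<in> A \<and> z \<in> B) \<or> (y \<in> B \<and> z \<in> A)" using inA inB sfacts by auto
        then show ?thesis
        proof
          assume "y \<in> A \<and> z \<in> B" then show ?thesis using core3c[of y z] 3 by auto
        next
          assume "y \<in> B \<and> z \<in> A" then show ?thesis using core3c[of z y] 3 by auto
        qed
      next
        case 4
        then have "(y \<in> A \<and> z \<in> B) \<or> (y \<in> B \<and> z \<in> A)" using inA inB sfacts by auto
        then show ?thesis
        proof
          assume "y \<in> A \<and> z \<in> B" then show ?thesis using gctx.core3c[OF swapab, of y z] 4 by auto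
        next
          assume "y \<in> B \<and> z \<in> A" then show ?thesis using gctx.core3c[OF swapab, of z y] 4 by auto
        qed
      qed
    qed
  qed
  {
    fix x y assume xy: "x \<in> V" "y \<in> V" "x \<noteq> y"
    obtain p q where pq: "p \<in> A" "q \<in> B" using sfacts by blast
    have "\<exists>z\<in>V. z \<noteq> x \<and> z \<noteq> y"
    proof (cases "a \<noteq> x \<and> a \<noteq> y")
      case True then show ?thesis using sfacts by auto
    next
      case F: False
      show ?thesis
      proof (cases "b \<noteq> x \<and> b \<noteq> y")
        case True then show ?thesis using sfacts by auto
      next
        case False
        then have "p \<noteq> x \<and> p \<noteq> y" using F pq sfacts by auto
        then show ?thesis using pq sfacts by auto
      qed
    qed
    then obtain z where z: "z \<in> V" "z \<noteq> x" "z \<noteq> y" by blast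
    show "\<exists>c. colouring m V E c \<and> c x \<noteq> c y" using G3[of x y z] xy z by auto
  }
  {
    fix x y z assume xy: "x \<in> V" "y \<in> V" "z \<in> V" "x \<noteq> y \<and> x \<noteq> z \<and> y \<noteq> z"
    then show "\<exists>c. colouring m V E c \<and> c x \<notin> {c y, c z}" using G3 by blast
  }
next
  fix x y z assume xy: "x \<in> V" "y \<in> V" "z \<in> V" "x \<noteq> y \<and> x \<noteq> z \<and> y \<noteq> z \<and> \<not> (E x y \<and> E x z \<and> E y z)"
  have d: "x \<noteq> y" "x \<noteq> z" "y \<noteq> z" and nt0: "\<not> (E x y \<and> E x z \<and> E y z)" using xy(4) by auto
  show "\<exists>c. colouring m V E c \<and> card {c x, c y, c z} = 2"
  proof (cases "x \<in> V1 \<and> y \<in> V1 \<and> z \<in> V1")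
    case True
    obtain c1 where c1: "col1 c1" "card {c1 x, c1 y, c1 z} = 2"
      using c1_4[of x y z] True d nt0 by blast
    obtain c where c: "colouring m V E c" "\<forall>v\<in>V1. c v = c1 v" using lift1[OF c1(1)] by blast
    have "c x = c1 x" "c y = c1 y" "c z = c1 z" using c(2) True by auto
    then show ?thesis using c(1) c1(2) by (intro exI[of _ c]) simp
  next
    case F1: False
    show ?thesis
    proof (cases "x \<in> V2 \<and> y \<in> V2 \<and> z \<in> V2")
      case True
      have nt: "\<not> (induced E V2 x y \<and> induced E V2 x z \<and> induced E V2 y z)"
      proof
        assume "induced E V2 x y \<and> induced E V2 x z \<and> induced E V2 y z"
        then have "E x y" "E x z" "E y z" by simp_all
        then show False using nt0 by simp
      qed
      obtain c2 where c2: "col2 c2" "card {c2 x, c2 y, c2 z} = 2"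
        using CL4[OF CLB, of x y z] True d nt by blast
      obtain c where c: "colouring m V E c" "\<forall>v\<in>V2. c v = c2 v" using lift2[OF c2(1)] by blast
      have "c x = c2 x" "c y = c2 y" "c z = c2 z" using c(2) True by auto
      then show ?thesis using c(1) c2(2) by (intro exI[of _ c]) simp
    next
      case F2: False
      have inB: "x \<in> B \<or> y \<in> B \<or> z \<in> B" using F1 classify xy by blast
      have inA: "x \<in> A \<or> y \<in> A \<or> z \<in> A" using F2 classify xy by blast
      have sA: "B \<inter> A = {}" using sfacts by blast
      obtain w u v where wuv: "w \<in> B" "u \<in> A" "v \<noteq> u" "v \<noteq> w" "{x,y,z} = {w,u,v}"
        using pick3[OF d inB inA sA] by blast
      have "v \<in> {x,y,z}" unfolding wuv(5) by simp
      then have vV: "v \<in> V" using xy(1-3) by blast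
      show ?thesis
      proof (cases "v \<in> B")
        case True
        have v2: "v \<in> B \<union> {a,b}" using True by blast
        have "\<exists>c. colouring m V E c \<and> card {c u, c w, c v} = 2"
          by (rule gctx.core4[OF swapAB wuv(1) v2 wuv(4) wuv(2)])
        moreover have "{u,w,v} = {x,y,z}" using wuv(5) by (simp add: insert_commute)
        ultimately show ?thesis by (rule G4_of)
      next
        case False
        then have v1: "v \<in> V1" using vV classify by blast
        have "\<exists>c. colouring m V E c \<and> card {c w, c u, c v} = 2"
          by (rule core4[OF wuv(2) v1 wuv(3) wuv(1)])
        moreover have "{w,u,v} = {x,y,z}" using wuv(5) by simp
        ultimately show ?thesis by (rule G4_of)
      qed
    qed
  qed
qed

end

lemma main: "m \<ge> 4 \<Longrightarrow> graph V E \<Longrightarrow> fragile m V E \<Longrightarrow> CL m V E"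
proof (induction "card V" arbitrary: V E rule: less_induct)
  case less
  show ?case
  proof (cases "card V \<le> 3")
    case True then show ?thesis using base_small less by blast
  next
    case F: False
    show ?thesis
    proof (cases "k_connected 3 V E")
      case True then show ?thesis using base_3conn less by blast
    next
      case False
      obtain A B a b where s: "sep V E A B a b" using sep_exists[OF less(3) _ False] F by auto
      have s2: "sep V E B A a b" using sep_swapAB[OF s] .
      have h1: "CL m (A \<union> {a,b}) (induced E (A \<union> {a,b}))"
        using less(1)[OF sep_card(1)[OF less(3) s] less(2) graph_induced[OF less(3) sep_card(2)[OF less(3) s]]
          fragile_induced[OF less(3) less(4) sep_card(2)[OF less(3) s]]] .
      have h2: "CL m (B \<union> {a,b}) (induced E (B \<union> {a,b}))"
        using less(1)[OF sep_card(1)[OF less(3) s2] less(2) graph_induced[OF less(3) sep_card(2)[OF less(3) s2]]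
          fragile_induced[OF less(3) less(4) sep_card(2)[OF less(3) s2]]] .
      have "gctx m V E A B a b" using less(2-4) s h1 h2 by unfold_locales auto
      then show ?thesis by (rule gctx.glue_CL)
    qed
  qed
qed

theorem theorem3:
  fixes m :: nat and V :: "'a set" and E :: "'a \<Rightarrow> 'a \<Rightarrow> bool"
  assumes "m \<ge> 4" and "graph V E" and "fragile m V E"
  shows "(\<forall>x\<in>V. \<forall>y\<in>V. x \<noteq> y \<and> \<not> E x y \<longrightarrow> (\<exists>c. colouring m V E c \<and> c x = c y))
    \<and> (\<forall>x\<in>V. \<forall>y\<in>V. x \<noteq> y \<longrightarrow> (\<exists>c. colouring m V E c \<and> c x \<noteq> c y))
    \<and> (\<forall>x\<in>V. \<forall>y\<in>V. \<forall>z\<in>V. x \<noteq> y \<and> x \<noteq> z \<and> y \<noteq> z \<longrightarrow>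
         (\<exists>c. colouring m V E c \<and> c x \<notin> {c y, c z}))
    \<and> (\<forall>x\<in>V. \<forall>y\<in>V. \<forall>z\<in>V. x \<noteq> y \<and> x \<noteq> z \<and> y \<noteq> z \<and> \<not> (E x y \<and> E x z \<and> E y z) \<longrightarrow>
         (\<exists>c. colouring m V E c \<and> card {c x, c y, c z} = 2))"
  using main[OF assms] unfolding CL_def .

end
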